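(* Assume the Setting and consider Algorithm 1 (with any $\beta\in(0,\infty]$) using a sequence of noisy data $y^{\delta_k}$ with $\|y^{\delta_k}-y\|\le\delta_k$, $0<\delta_k\to0$, where $\tau>1$ and $\mu_0>0$ satisfy $1-\frac{1+\eta}{\tau}-\eta-\frac{\mu_0}{4\sigma}>0$. Let $n_k:=n_{\delta_k}$ be the stopping index. Then there is a subsequence $(k_l)$ such that $x_{n_{k_l}}^{\delta_{k_l}}\rightharpoonup x^*$ weakly as $l\to\infty$ for some solution $x^*$ of $F(x)=y$ with $x^*\in B_{2\rho}(x_0)$. If in addition $\mathcal R(x)=\frac12\|x\|^2$ and $\mathrm{Ker}(L(x^\dagger))\subset\mathrm{Ker}(L(x))$ for all $x\in B_{2\rho}(x_0)$, then $x_{n_k}^{\delta_k}\rightharpoonup x^\dagger$ as $k\to\infty$, where $x^\dagger$ is the unique solution of $F(x)=y$ minimizing $\|x-x_0\|$.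
   Context: Setting. Let $X,Y$ be real Hilbert spaces. Let $\mathcal R:X\to(-\infty,\infty]$ be proper, lower semicontinuous and strongly convex with constant $\sigma>0$, i.e. $\mathcal R(t\bar x+(1-t)x)+\sigma t(1-t)\|\bar x-x\|^2\le t\mathcal R(\bar x)+(1-t)\mathcal R(x)$ for all $\bar x,x\in\mathrm{dom}(\mathcal R)$ and $t\in[0,1]$. For $\xi\in\partial\mathcal R(x)$ (subdifferential) the Bregman distance is $D_{\mathcal R}^{\xi}(z,x)=\mathcal R(z)-\mathcal R(x)-\langle\xi,z-x\rangle$. The convex conjugate $\mathcal R^*$ is differentiable with $\|\nabla\mathcal R^*(\bar\xi)-\nabla\mathcal R^*(\xi)\|\le\|\bar\xi-\xi\|/(2\sigma)$, and $\nabla\mathcal R^*(\xi)=\arg\min_{x\in X}\{\mathcal R(x)-\langle\xi,x\rangle\}$ (unique minimizer), with $\xi\in\partial\mathcal R(\nabla\mathcal R^*(\xi))$. Let $F:\mathrm{dom}(F)\subset X\to Y$ and $y\in Y$. Assume: (b) there are $\rho>0$, $x_0\in X$, $\xi_0\in\partial\mathcal R(x_0)$ with $B_{2\rho}(x_0):=\{x:\|x-x_0\|\le 2\rho\}\subset\mathrm{dom}(F)$, and $F(x)=y$ has a solution $\bar x$ with $D_{\mathcal R}^{\xi_0}(\bar x,x_0)\le\sigma\rho^2$; (c) $F$ is weakly closed: if $x_n\in\mathrm{dom}(F)$, $x_n\rightharpoonup x$ and $F(x_n)\to v$, then $x\in\mathrm{dom}(F)$ and $F(x)=v$; (d) there are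 bounded linear operators $L(x):X\to Y$, $x\in B_{2\rho}(x_0)$, with $x\mapsto L(x)$ continuous on $B_{2\rho}(x_0)$, a constant $\eta\in[0,1)$ with $\|F(x)-F(\bar x)-L(\bar x)(x-\bar x)\|\le\eta\|F(x)-F(\bar x)\|$ for all $x,\bar x\in B_{2\rho}(x_0)$, and a constant $L>0$ with $\|L(x)\|\le L$ on $B_{2\rho}(x_0)$. Under these assumptions $F(x)=y$ has a unique solution $x^\dagger\in\mathrm{dom}(F)$ minimizing $D_{\mathcal R}^{\xi_0}(x,x_0)$ over all solutions; it satisfies $\|x^\dagger-x_0\|\le\rho$. Algorithm 1 (noisy data $y^\delta$ with $\|y^\delta-y\|\le\delta$, $\delta>0$). Parameters: $\tau>1$, $\beta\in(0,\infty]$, $\mu_0>0$, $\mu_1>0$, and a fixed choice of one of two step-size rules: (constant) $\alpha_n^\delta=\mu_0/L^2$, or (adaptive) $\alpha_n^\delta=\min\{\mu_0\|r_n^\delta\|^2/\|g_n^\delta\|^2,\mu_1\}$ (with $\mu_0\|r_n^\delta\|^2/\|g_n^\delta\|^2:=+\infty$ if $g_n^\delta=0$). Set $\xi_{-1}^\delta=\xi_0^\delta=\xi_0$, $x_0^\delta=x_0=\nabla\mathcal R^*(\xi_0)$. For $n\ge0$: (i) $r_n^\delta:=F(x_n^\delta)-y^\delta$; if $\|r_n^\delta\|\le\tau\delta$, stop and output $x_n^\delta$ (the stopping index is denoted $n_\delta$; it is finite under the hypotheses of the claim). (ii) $g_n^\delta:=L(x_n^\delta)^*r_n^\delta$ and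 $\alpha_n^\delta$ by the chosen rule. (iii) $m_n^\delta:=\xi_n^\delta-\xi_{n-1}^\delta$; $\tilde\gamma_0^\delta:=0$ and for $n\ge1$, $\tilde\gamma_n^\delta:=\langle m_n^\delta,x_n^\delta-x_{n-1}^\delta\rangle-(1-\eta)\alpha_{n-1}^\delta\|r_{n-1}^\delta\|^2+(1+\eta)\alpha_{n-1}^\delta\delta\|r_{n-1}^\delta\|+\beta_{n-1}^\delta\tilde\gamma_{n-1}^\delta$. (iv) $\beta_n^\delta:=\min\{\max\{0,(\alpha_n^\delta\langle g_n^\delta,m_n^\delta\rangle-2\sigma\tilde\gamma_n^\delta)/\|m_n^\delta\|^2\},\beta\}$ if $m_n^\delta\ne0$, and $\beta_n^\delta:=0$ if $m_n^\delta=0$. (v) $\xi_{n+1}^\delta:=\xi_n^\delta-\alpha_n^\delta g_n^\delta+\beta_n^\delta m_n^\delta$, $x_{n+1}^\delta:=\nabla\mathcal R^*(\xi_{n+1}^\delta)$. *)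

theory Defs
  imports "HOL-Analysis.Analysis" "HOL-Library.Extended_Real"
begin

definition weakly_conv :: "(nat \<Rightarrow> 'a::real_inner) \<Rightarrow> 'a \<Rightarrow> bool" where
  "weakly_conv xs x \<longleftrightarrow> (\<forall>v. (\<lambda>n. inner (xs n) v) \<longlonglongrightarrow> inner x v)"

definition proper_fun :: "('a \<Rightarrow> ereal) \<Rightarrow> bool" where
  "proper_fun R \<longleftrightarrow> (\<forall>x. R x \<noteq> -\<infinity>) \<and> (\<exists>x. R x \<noteq> \<infinity>)"

definition lsc_fun :: "('a::topological_space \<Rightarrow> ereal) \<Rightarrow> bool" where
  "lsc_fun R \<longleftrightarrow> (\<forall>x xs. xs \<longlonglongrightarrow> x \<longrightarrow> R x \<le> liminf (\<lambda>n. R (xs n)))"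

definition strongly_convex :: "('a::real_normed_vector \<Rightarrow> ereal) \<Rightarrow> real \<Rightarrow> bool" where
  "strongly_convex R \<sigma> \<longleftrightarrow>
     (\<forall>xb x t. R xb \<noteq> \<infinity> \<longrightarrow> R x \<noteq> \<infinity> \<longrightarrow> 0 \<le> t \<longrightarrow> t \<le> 1 \<longrightarrow>
        R (t *\<^sub>R xb + (1 - t) *\<^sub>R x) + ereal (\<sigma> * t * (1 - t) * (norm (xb - x))\<^sup>2)
          \<le> ereal t * R xb + ereal (1 - t) * R x)"

definition subdiff :: "('a::real_inner \<Rightarrow> ereal) \<Rightarrow> 'a \<Rightarrow> 'a set" where
  "subdiff R x = {\<xi>. R x \<noteq> \<infinity> \<and> (\<forall>z. R x + ereal (inner \<xi> (z - x)) \<le> R z)}"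

definition bregman :: "('a::real_inner \<Rightarrow> ereal) \<Rightarrow> 'a \<Rightarrow> 'a \<Rightarrow> 'a \<Rightarrow> ereal" where
  "bregman R \<xi> z x = R z - R x - ereal (inner \<xi> (z - x))"

text \<open>Gradient of the convex conjugate: the (unique) minimiser of R x - <xi,x>.\<close>
definition grad_conj :: "('a::real_inner \<Rightarrow> ereal) \<Rightarrow> 'a \<Rightarrow> 'a" where
  "grad_conj R \<xi> = (THE x. \<forall>z. R x - ereal (inner \<xi> x) \<le> R z - ereal (inner \<xi> z))"

definition step_alpha :: "bool \<Rightarrow> real \<Rightarrow> real \<Rightarrow> real \<Rightarrow> 'b::real_normed_vector \<Rightarrow> 'a::real_normed_vector \<Rightarrow> real" where
  "step_alpha adaptive \<mu>0 \<mu>1 Lc r g =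
     (if adaptive then (if g = 0 then \<mu>1 else min (\<mu>0 * (norm r)\<^sup>2 / (norm g)\<^sup>2) \<mu>1)
      else \<mu>0 / Lc\<^sup>2)"

definition step_beta :: "ereal \<Rightarrow> real \<Rightarrow> real \<Rightarrow> real \<Rightarrow> 'a::real_inner \<Rightarrow> 'a \<Rightarrow> real" where
  "step_beta \<beta> \<sigma> \<alpha> \<gamma> g m =
     (if m = 0 then 0 else
        (let t = (\<alpha> * inner g m - 2 * \<sigma> * \<gamma>) / (norm m)\<^sup>2 in
           if \<beta> = \<infinity> then max 0 t else min (max 0 t) (real_of_ereal \<beta>)))"

text \<open>State of Algorithm 1 at step n: (xi_n, xi_{n-1}, gamma~_n).\<close>
primrec alg1 :: "('a::real_inner \<Rightarrow> ereal) \<Rightarrow> ('a \<Rightarrow> 'b::real_inner) \<Rightarrow> ('a \<Rightarrow> ('a \<Rightarrow>\<^sub>L 'b))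
   \<Rightarrow> real \<Rightarrow> real \<Rightarrow> real \<Rightarrow> bool \<Rightarrow> real \<Rightarrow> real \<Rightarrow> ereal
   \<Rightarrow> 'a \<Rightarrow> 'b \<Rightarrow> real \<Rightarrow> nat \<Rightarrow> 'a \<times> 'a \<times> real" where
  "alg1 R F Lop \<sigma> \<eta> Lc adaptive \<mu>0 \<mu>1 \<beta> \<xi>0 yd \<delta> 0 = (\<xi>0, \<xi>0, 0)"
| "alg1 R F Lop \<sigma> \<eta> Lc adaptive \<mu>0 \<mu>1 \<beta> \<xi>0 yd \<delta> (Suc n) =
    (case alg1 R F Lop \<sigma> \<eta> Lc adaptive \<mu>0 \<mu>1 \<beta> \<xi>0 yd \<delta> n of (\<xi>, \<xi>p, \<gamma>) \<Rightarrow>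
      (let x = grad_conj R \<xi>;
           r = F x - yd;
           g = adjoint (blinfun_apply (Lop x)) r;
           \<alpha> = step_alpha adaptive \<mu>0 \<mu>1 Lc r g;
           m = \<xi> - \<xi>p;
           b = step_beta \<beta> \<sigma> \<alpha> \<gamma> g m;
           \<xi>n = \<xi> - \<alpha> *\<^sub>R g + b *\<^sub>R m;
           xn = grad_conj R \<xi>n
       in (\<xi>n, \<xi>,
           inner (\<xi>n - \<xi>) (xn - x) - (1 - \<eta>) * \<alpha> * (norm r)\<^sup>2
             + (1 + \<eta>) * \<alpha> * \<delta> * norm r + b * \<gamma>)))"

definition alg1_x where
  "alg1_x R F Lop \<sigma> \<eta> Lc adaptive \<mu>0 \<mu>1 \<beta> \<xi>0 yd \<delta> n =
     grad_conj R (fst (alg1 R F Lop \<sigma> \<eta> Lc adaptive \<mu>0 \<mu>1 \<beta> \<xi>0 yd \<delta> n))"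

definition alg1_stop where
  "alg1_stop R F Lop \<sigma> \<eta> Lc adaptive \<mu>0 \<mu>1 \<beta> \<xi>0 yd \<delta> \<tau> =
     (LEAST n. norm (F (alg1_x R F Lop \<sigma> \<eta> Lc adaptive \<mu>0 \<mu>1 \<beta> \<xi>0 yd \<delta> n) - yd) \<le> \<tau> * \<delta>)"

end

theory Submission imports Defs "HOL-Library.Diagonal_Subsequence" begin

lemma quad0:
  fixes a b :: real
  assumes h: "\<And>t. \<bar>t\<bar> \<le> 1 \<Longrightarrow> 0 \<le> a*t + b*t\<^sup>2" and b: "0 \<le> b"
  shows "a = 0"
proof (rule ccontr)
  assume a: "a \<noteq> 0"
  define s where "s = \<bar>a\<bar> + b"
  have s: "s > 0" using a b by (simp add: s_def)
  define t where "t = -a/s"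
  have "\<bar>t\<bar> = \<bar>a\<bar>/s" using s by (simp add: t_def abs_divide)
  also have "\<dots> \<le> 1" using s b by (simp add: s_def)
  finally have "0 \<le> a*t + b*t\<^sup>2" using h by blast
  also have "a*t + b*t\<^sup>2 = a\<^sup>2 * (b - s) / s\<^sup>2"
    using s by (simp add: t_def field_simps power2_eq_square)
  also have "\<dots> = - (a\<^sup>2 * \<bar>a\<bar>) / s\<^sup>2" by (simp add: s_def)
  also have "\<dots> < 0" using a s by (simp add: divide_neg_pos)
  finally show False by simp
qed

lemma genmin:
  fixes \<phi> :: "'a::{real_normed_vector,complete_space} \<Rightarrow> real"
  assumes ne: "z0 \<in> C"
    and mid: "\<And>a b. a \<in> C \<Longrightarrow> b \<in> C \<Longrightarrow> (1/2) *\<^sub>R (a + b) \<in> C"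
    and lb: "\<And>z. z \<in> C \<Longrightarrow> B \<le> \<phi> z"
    and c: "c > 0"
    and sc: "\<And>a b. a \<in> C \<Longrightarrow> b \<in> C \<Longrightarrow> 2 * \<phi> ((1/2) *\<^sub>R (a + b)) + 2 * c * (norm (a - b))\<^sup>2 \<le> \<phi> a + \<phi> b"
    and cl: "\<And>z l v. (\<forall>n. z n \<in> C) \<Longrightarrow> z \<longlonglongrightarrow> l \<Longrightarrow> (\<lambda>n. \<phi> (z n)) \<longlonglongrightarrow> v \<Longrightarrow> l \<in> C \<and> \<phi> l \<le> v"
  shows "\<exists>z\<in>C. \<forall>w\<in>C. \<phi> z \<le> \<phi> w"
proof -
  define m where "m = Inf (\<phi> ` C)"
  have bdd: "bdd_below (\<phi> ` C)" by (meson bdd_belowI2 lb)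
  have mle: "\<And>w. w \<in> C \<Longrightarrow> m \<le> \<phi> w" unfolding m_def using bdd by (simp add: cInf_lower)
  have "\<forall>n. \<exists>z. z \<in> C \<and> \<phi> z < m + 1 / (Suc n)"
  proof
    fix n
    have "Inf (\<phi> ` C) < m + 1 / Suc n" by (simp add: m_def)
    then obtain v where "v \<in> \<phi> ` C" "v < m + 1 / Suc n"
      using cInf_lessD[of "\<phi> ` C"] ne by blast
    then show "\<exists>z. z \<in> C \<and> \<phi> z < m + 1 / (Suc n)" by auto
  qed
  then obtain z where zC: "\<And>n. z n \<in> C" and zl: "\<And>n. \<phi> (z n) < m + 1 / Suc n"
    by metis
  have key: "2 * c * (norm (z i - z j))\<^sup>2 \<le> 1 / Suc i + 1 / Suc j" for i j
  proof -
    have "m \<le> \<phi> ((1/2) *\<^sub>R (z i + z j))" using mle mid zC by blast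
    then show ?thesis using sc[OF zC zC, of i j] zl[of i] zl[of j] by linarith
  qed
  have "Cauchy z"
  proof (rule CauchyI)
    fix e :: real assume e: "0 < e"
    obtain M :: nat where M: "1 / (c * e\<^sup>2) < M" using reals_Archimedean2 by blast
    have cM: "1 / Suc M < c * e\<^sup>2"
    proof -
      have "0 < c * e\<^sup>2" using c e by simp
      then have "1 < c * e\<^sup>2 * Suc M" using M by (simp add: field_simps)
      then show ?thesis using \<open>0 < c * e\<^sup>2\<close> by (simp add: field_simps)
    qed
    show "\<exists>M. \<forall>i\<ge>M. \<forall>j\<ge>M. norm (z i - z j) < e"
    proof (intro exI allI impI)
      fix i j assume i: "M \<le> i" and j: "M \<le> j"
      have "1 / real (Suc i) \<le> 1 / Suc M" using i by (simp add: frac_le)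
      moreover have "1 / real (Suc j) \<le> 1 / Suc M" using j by (simp add: frac_le)
      ultimately have "2 * c * (norm (z i - z j))\<^sup>2 < 2 * (c * e\<^sup>2)" using key[of i j] cM by linarith
      then have "(norm (z i - z j))\<^sup>2 < e\<^sup>2" using c by simp
      then show "norm (z i - z j) < e" using e by (simp add: power_less_imp_less_base)
    qed
  qed
  then obtain l where zlim: "z \<longlonglongrightarrow> l" using Cauchy_convergent_iff convergent_def by blast
  have plim: "(\<lambda>n. \<phi> (z n)) \<longlonglongrightarrow> m"
  proof (rule tendsto_sandwich[of "\<lambda>n. m" _ _ "\<lambda>n. m + 1 / Suc n"])
    show "\<forall>\<^sub>F n in sequentially. m \<le> \<phi> (z n)" using mle zC by simp
    show "\<forall>\<^sub>F n in sequentially. \<phi> (z n) \<le> m + 1 / real (Suc n)" using zl by (intro always_eventually allI less_imp_le)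
    show "(\<lambda>n. m) \<longlonglongrightarrow> m" by simp
    have "(\<lambda>n. 1 / real (Suc n)) \<longlonglongrightarrow> 0" using LIMSEQ_inverse_real_of_nat by (simp add: inverse_eq_divide)
    then show "(\<lambda>n. m + 1 / real (Suc n)) \<longlonglongrightarrow> m" using tendsto_add[of "\<lambda>n. m" m sequentially] by force
  qed
  from cl[OF _ zlim plim] zC have "l \<in> C" "\<phi> l \<le> m" by auto
  then show ?thesis using mle by force
qed

lemma parallelogram:
  fixes a b :: "'a::real_inner"
  shows "(norm (a + b))\<^sup>2 + (norm (a - b))\<^sup>2 = 2 * (norm a)\<^sup>2 + 2 * (norm b)\<^sup>2"
  by (simp add: power2_norm_eq_inner inner_add_left inner_add_right inner_diff_left inner_diff_right inner_commute)

lemma norm_add_sq: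
  fixes a b :: "'a::real_inner"
  shows "(norm (a + b))\<^sup>2 = (norm a)\<^sup>2 + 2 * inner a b + (norm b)\<^sup>2"
  by (simp add: power2_norm_eq_inner inner_add_left inner_add_right inner_commute)

lemma norm_diff_sq:
  fixes a b :: "'a::real_inner"
  shows "(norm (a - b))\<^sup>2 = (norm a)\<^sup>2 - 2 * inner a b + (norm b)\<^sup>2"
  by (simp add: power2_norm_eq_inner inner_diff_left inner_diff_right inner_commute)

lemma riesz_sub:
  fixes S :: "'a::{real_inner,complete_space} set" and lf :: "'a \<Rightarrow> real"
  assumes sub: "subspace S" and clo: "closed S"
    and ladd: "\<And>a b. a \<in> S \<Longrightarrow> b \<in> S \<Longrightarrow> lf (a + b) = lf a + lf b"
    and lmul: "\<And>c a. a \<in> S \<Longrightarrow> lf (c *\<^sub>R a) = c * lf a"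
    and bnd: "\<And>w. w \<in> S \<Longrightarrow> \<bar>lf w\<bar> \<le> B * norm w"
  shows "\<exists>p\<in>S. \<forall>w\<in>S. inner p w = lf w"
proof -
  define \<psi> where "\<psi> z = (norm z)\<^sup>2 - 2 * lf z" for z
  have lb: "- (B\<^sup>2) \<le> \<psi> z" if "z \<in> S" for z
  proof -
    have "lf z \<le> \<bar>B\<bar> * norm z" using bnd[OF that] by (smt (verit) abs_ge_self mult_right_mono norm_ge_zero)
    moreover have "0 \<le> (norm z - \<bar>B\<bar>)\<^sup>2" by simp
    then have "2 * (\<bar>B\<bar> * norm z) \<le> (norm z)\<^sup>2 + B\<^sup>2" by (simp add: power2_diff power2_abs mult_ac)
    ultimately show ?thesis unfolding \<psi>_def by linarith
  qed
  have mid: "(1/2) *\<^sub>R (a + b) \<in> S" if "a \<in> S" "b \<in> S" for a b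
    using sub that by (simp add: subspace_add subspace_mul)
  have sc: "2 * \<psi> ((1/2) *\<^sub>R (a + b)) + 2 * (1/4) * (norm (a - b))\<^sup>2 \<le> \<psi> a + \<psi> b"
    if "a \<in> S" "b \<in> S" for a b
  proof -
    have "lf ((1/2) *\<^sub>R (a + b)) = (lf a + lf b) / 2"
      using lmul ladd that sub by (simp add: subspace_add)
    moreover have "(norm ((1/2) *\<^sub>R (a + b)))\<^sup>2 = (norm (a + b))\<^sup>2 / 4"
      by (simp add: power2_eq_square)
    ultimately show ?thesis unfolding \<psi>_def using parallelogram[of a b] by (simp add: field_simps)
  qed
  have cl: "l \<in> S \<and> \<psi> l \<le> v" if zS: "\<forall>n. z n \<in> S" and zl: "z \<longlonglongrightarrow> l" and pv: "(\<lambda>n. \<psi> (z n)) \<longlonglongrightarrow> v" for z l v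
  proof -
    have lS: "l \<in> S" using closed_sequentially[OF clo _ zl] zS by blast
    have "(\<lambda>n. lf (z n) - lf l) \<longlonglongrightarrow> 0"
    proof (rule Lim_null_comparison)
      show "\<forall>\<^sub>F n in sequentially. norm (lf (z n) - lf l) \<le> \<bar>B\<bar> * norm (z n - l)"
      proof (intro always_eventually allI)
        fix n
        have "lf (z n) = lf (z n - l) + lf l" using ladd[of "z n - l" l] zS lS sub by (simp add: subspace_diff)
        then have "norm (lf (z n) - lf l) = \<bar>lf (z n - l)\<bar>" by simp
        also have "\<dots> \<le> B * norm (z n - l)" using bnd zS lS sub by (simp add: subspace_diff)
        also have "\<dots> \<le> \<bar>B\<bar> * norm (z n - l)" by (simp add: mult_right_mono)
        finally show "norm (lf (z n) - lf l) \<le> \<bar>B\<bar> * norm (z n - l)" .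
      qed
      have "(\<lambda>n. z n - l) \<longlonglongrightarrow> 0" using zl by (simp add: Lim_null[symmetric])
      then have "(\<lambda>n. norm (z n - l)) \<longlonglongrightarrow> 0" using tendsto_norm_zero by blast
      then show "(\<lambda>n. \<bar>B\<bar> * norm (z n - l)) \<longlonglongrightarrow> 0" using tendsto_mult_right_zero by blast
    qed
    then have t1: "(\<lambda>n. lf (z n)) \<longlonglongrightarrow> lf l" by (simp add: Lim_null[symmetric])
    have t2: "(\<lambda>n. (norm (z n))\<^sup>2) \<longlonglongrightarrow> (norm l)\<^sup>2" using zl by (intro tendsto_intros)
    have "(\<lambda>n. \<psi> (z n)) \<longlonglongrightarrow> \<psi> l" unfolding \<psi>_def using tendsto_diff[OF t2 tendsto_mult_left[OF t1, of 2]] by simp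
    then have "v = \<psi> l" using pv LIMSEQ_unique by blast
    then show ?thesis using lS by simp
  qed
  obtain p where pS: "p \<in> S" and pmin: "\<And>w. w \<in> S \<Longrightarrow> \<psi> p \<le> \<psi> w"
    using genmin[of 0 S "- (B\<^sup>2)" \<psi> "1/4", OF subspace_0[OF sub] mid lb _ sc cl] by force
  have "inner p w = lf w" if wS: "w \<in> S" for w
  proof -
    have "0 \<le> (2 * (inner p w - lf w)) * t + (norm w)\<^sup>2 * t\<^sup>2" for t
    proof -
      have ptw: "p + t *\<^sub>R w \<in> S" using sub pS wS by (simp add: subspace_add subspace_mul)
      have "lf (p + t *\<^sub>R w) = lf p + t * lf w" using ladd lmul pS wS sub by (simp add: subspace_mul)
      moreover have "(norm (p + t *\<^sub>R w))\<^sup>2 = (norm p)\<^sup>2 + 2 * t * inner p w + t\<^sup>2 * (norm w)\<^sup>2"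
        by (simp add: norm_add_sq power_mult_distrib)
      ultimately show ?thesis using pmin[OF ptw] unfolding \<psi>_def by (simp add: algebra_simps)
    qed
    then have "2 * (inner p w - lf w) = 0" using quad0[of "2 * (inner p w - lf w)" "(norm w)\<^sup>2"] by simp
    then show ?thesis by simp
  qed
  then show ?thesis using pS by blast
qed

lemma adjoint_inner:
  fixes f :: "'a::{real_inner,complete_space} \<Rightarrow>\<^sub>L 'b::real_inner"
  shows "inner (adjoint (blinfun_apply f) r) v = inner r (blinfun_apply f v)"
proof -
  have "\<forall>r. \<exists>p. \<forall>v. inner p v = inner r (blinfun_apply f v)"
  proof
    fix r
    have "\<exists>p\<in>UNIV. \<forall>w\<in>UNIV. inner p w = inner r (blinfun_apply f w)"
    proof (rule riesz_sub[where B = "norm r * norm f"])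
      show "subspace (UNIV :: 'a set)" by simp
      show "closed (UNIV :: 'a set)" by simp
      show "inner r (blinfun_apply f (a + b)) = inner r (blinfun_apply f a) + inner r (blinfun_apply f b)" for a b
        by (simp add: blinfun.add_right inner_add_right)
      show "inner r (blinfun_apply f (c *\<^sub>R a)) = c * inner r (blinfun_apply f a)" for c a
        by (simp add: blinfun.scaleR_right)
      show "\<bar>inner r (blinfun_apply f w)\<bar> \<le> norm r * norm f * norm w" for w
      proof -
        have "\<bar>inner r (blinfun_apply f w)\<bar> \<le> norm r * norm (blinfun_apply f w)" by (rule Cauchy_Schwarz_ineq2)
        also have "\<dots> \<le> norm r * (norm f * norm w)" by (simp add: mult_left_mono norm_blinfun)
        finally show ?thesis by (simp add: mult.assoc)
      qed
    qed
    then show "\<exists>p. \<forall>v. inner p v = inner r (blinfun_apply f v)" by blast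
  qed
  then obtain g where g: "\<And>r v. inner (g r) v = inner r (blinfun_apply f v)" by metis
  have "\<forall>x y. inner (blinfun_apply f x) y = inner x (adjoint (blinfun_apply f) y)"
    unfolding adjoint_def
  proof (rule someI[where x = g])
    show "\<forall>x y. inner (blinfun_apply f x) y = inner x (g y)" using g by (simp add: inner_commute)
  qed
  then show ?thesis by (simp add: inner_commute)
qed

lemma adjoint_norm:
  fixes f :: "'a::{real_inner,complete_space} \<Rightarrow>\<^sub>L 'b::real_inner"
  shows "norm (adjoint (blinfun_apply f) r) \<le> norm f * norm r"
proof -
  define g where "g = adjoint (blinfun_apply f) r"
  have "(norm g)\<^sup>2 = inner r (blinfun_apply f g)" by (simp add: power2_norm_eq_inner g_def adjoint_inner)
  also have "\<dots> \<le> norm r * norm (blinfun_apply f g)" using Cauchy_Schwarz_ineq2 abs_le_D1 by blast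
  also have "\<dots> \<le> norm r * (norm f * norm g)" by (simp add: mult_left_mono norm_blinfun)
  finally have h: "norm g * norm g \<le> (norm f * norm r) * norm g" by (simp add: power2_eq_square mult_ac)
  show ?thesis
  proof (cases "norm g = 0")
    case True then show ?thesis by (simp add: g_def[symmetric])
  next
    case False then have "norm g > 0" by simp
    then show ?thesis using h g_def by simp
  qed
qed

lemma weak_compact:
  fixes x :: "nat \<Rightarrow> 'a::{real_inner,complete_space}"
  assumes bnd: "\<And>n. norm (x n) \<le> B"
  shows "\<exists>s p. strict_mono s \<and> weakly_conv (x \<circ> s) p"
proof -
  have B0: "0 \<le> B" using bnd[of 0] norm_ge_zero order_trans by blast
  have ib: "\<bar>inner (x i) w\<bar> \<le> B * norm w" for i w
  proof -
    have "\<bar>inner (x i) w\<bar> \<le> norm (x i) * norm w" by (rule Cauchy_Schwarz_ineq2)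
    also have "\<dots> \<le> B * norm w" using bnd by (simp add: mult_right_mono)
    finally show ?thesis .
  qed
  define P where "P = (\<lambda>j (s::nat\<Rightarrow>nat). convergent (\<lambda>i. inner (x (s i)) (x j)))"
  interpret subseqs P
  proof
    fix j and s :: "nat \<Rightarrow> nat" assume "strict_mono s"
    define a where "a i = inner (x (s i)) (x j)" for i
    obtain r where r: "strict_mono r" "monoseq (\<lambda>n. a (r n))" using seq_monosub[of a] by blast
    have "Bseq (\<lambda>n. a (r n))"
      by (rule BseqI'[where K = "B * norm (x j)"]) (simp add: a_def ib)
    then have "convergent (\<lambda>n. a (r n))" using r Bseq_monoseq_convergent by blast
    then show "\<exists>r'. strict_mono r' \<and> P j (s \<circ> r')" using r by (auto simp: P_def a_def o_def)
  qed
  define d where "d = diagseq"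
  have dmono: "strict_mono d" unfolding d_def by (rule subseq_diagseq)
  have conv_j: "convergent (\<lambda>i. inner (x (d i)) (x j))" for j
  proof -
    have "P j (diagseq \<circ> (+) (Suc j))"
    proof (rule diagseq_holds)
      fix r s n assume "strict_mono (r :: nat \<Rightarrow> nat)" "P n s"
      then show "P n (s \<circ> r)" using convergent_subseq_convergent[of "\<lambda>i. inner (x (s i)) (x n)" r]
        by (simp add: P_def o_def)
    qed
    then obtain L where "(\<lambda>i. inner (x (diagseq (i + Suc j))) (x j)) \<longlonglongrightarrow> L"
      unfolding P_def convergent_def o_def by (auto simp: add.commute)
    then have "(\<lambda>i. inner (x (diagseq i)) (x j)) \<longlonglongrightarrow> L" by (rule LIMSEQ_offset)
    then show ?thesis by (auto simp: d_def convergent_def)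
  qed
  define y where "y = x \<circ> d"
  have yb: "\<bar>inner (y i) w\<bar> \<le> B * norm w" for i w using ib by (simp add: y_def)
  define S where "S = {w. convergent (\<lambda>i. inner (y i) w)}"
  have yS: "y i \<in> S" for i using conv_j[of "d i"] by (simp add: S_def y_def)
  have sub: "subspace S"
  proof (rule subspaceI)
    show "0 \<in> S" by (simp add: S_def convergent_const)
    show "a + b \<in> S" if "a \<in> S" "b \<in> S" for a b
      using that unfolding S_def by (simp add: inner_add_right convergent_add)
    show "c *\<^sub>R a \<in> S" if "a \<in> S" for c a
      using that unfolding S_def by (simp add: convergent_mult_const_iff convergent_const convergent_mult)
  qed
  have clo: "closed S"
    unfolding closed_sequential_limits
  proof (intro allI impI, elim conjE)
    fix w l assume wS: "\<forall>n. w n \<in> S" and wl: "w \<longlonglongrightarrow> l"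
    have "Cauchy (\<lambda>i. inner (y i) l)"
    proof (rule CauchyI)
      fix e :: real assume e: "0 < e"
      define e' where "e' = e / (3 * (B + 1))"
      have e': "e' > 0" using e B0 by (simp add: e'_def)
      obtain n where n: "norm (w n - l) < e'"
        using wl e' by (metis LIMSEQ_iff_nz dist_norm order_refl)
      have "Cauchy (\<lambda>i. inner (y i) (w n))" using wS by (simp add: S_def Cauchy_convergent_iff)
      then obtain M where M: "\<And>i j. M \<le> i \<Longrightarrow> M \<le> j \<Longrightarrow> \<bar>inner (y i) (w n) - inner (y j) (w n)\<bar> < e / 3"
        using CauchyD[of "\<lambda>i. inner (y i) (w n)" "e/3"] e by (auto simp: real_norm_def)
      have Be: "B * e' < e / 3" using B0 e by (simp add: e'_def field_simps)
      show "\<exists>M. \<forall>i\<ge>M. \<forall>j\<ge>M. norm (inner (y i) l - inner (y j) l) < e"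
      proof (intro exI allI impI)
        fix i j assume i: "M \<le> i" and j: "M \<le> j"
        have di: "\<bar>inner (y i) (l - w n)\<bar> \<le> B * e'"
          using yb[of i "l - w n"] n B0 by (smt (verit) mult_left_mono norm_minus_commute)
        have dj: "\<bar>inner (y j) (l - w n)\<bar> \<le> B * e'"
          using yb[of j "l - w n"] n B0 by (smt (verit) mult_left_mono norm_minus_commute)
        have "inner (y i) l - inner (y j) l = inner (y i) (l - w n) + (inner (y i) (w n) - inner (y j) (w n)) - inner (y j) (l - w n)"
          by (simp add: inner_diff_right)
        then show "norm (inner (y i) l - inner (y j) l) < e"
          using di dj M[OF i j] Be unfolding real_norm_def by linarith
      qed
    qed
    then show "l \<in> S" by (simp add: S_def Cauchy_convergent_iff)
  qed
  define f where "f w = lim (\<lambda>i. inner (y i) w)" for w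
  have flim: "(\<lambda>i. inner (y i) w) \<longlonglongrightarrow> f w" if "w \<in> S" for w
    using that by (simp add: S_def f_def convergent_LIMSEQ_iff)
  have "\<exists>p\<in>S. \<forall>w\<in>S. inner p w = f w"
  proof (rule riesz_sub[OF sub clo, where B = B])
    show "f (a + b) = f a + f b" if "a \<in> S" "b \<in> S" for a b
    proof -
      have "(\<lambda>i. inner (y i) (a + b)) \<longlonglongrightarrow> f a + f b"
        using tendsto_add[OF flim[OF that(1)] flim[OF that(2)]] by (simp add: inner_add_right)
      moreover have "a + b \<in> S" using sub that by (simp add: subspace_add)
      ultimately show ?thesis using flim LIMSEQ_unique by blast
    qed
    show "f (c *\<^sub>R a) = c * f a" if "a \<in> S" for c a
    proof -
      have "(\<lambda>i. inner (y i) (c *\<^sub>R a)) \<longlonglongrightarrow> c * f a"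
        using tendsto_mult_left[OF flim[OF that], of c] by simp
      moreover have "c *\<^sub>R a \<in> S" using sub that by (simp add: subspace_mul)
      ultimately show ?thesis using flim LIMSEQ_unique by blast
    qed
    show "\<bar>f w\<bar> \<le> B * norm w" if "w \<in> S" for w
    proof -
      have "(\<lambda>i. \<bar>inner (y i) w\<bar>) \<longlonglongrightarrow> \<bar>f w\<bar>" using flim[OF that] by (rule tendsto_rabs)
      then show ?thesis using yb by (intro tendsto_le[OF _ tendsto_const]) auto
    qed
  qed
  then obtain p where pS: "p \<in> S" and pf: "\<And>w. w \<in> S \<Longrightarrow> inner p w = f w" by blast
  have "(\<lambda>i. inner (y i) v) \<longlonglongrightarrow> inner p v" for v
  proof -
    have "\<exists>q\<in>S. \<forall>w\<in>S. inner q w = inner v w"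
    proof (rule riesz_sub[OF sub clo, where B = "norm v"])
      show "inner v (a + b) = inner v a + inner v b" for a b by (simp add: inner_add_right)
      show "inner v (c *\<^sub>R a) = c * inner v a" for c a by simp
      show "\<bar>inner v w\<bar> \<le> norm v * norm w" for w by (rule Cauchy_Schwarz_ineq2)
    qed
    then obtain q where qS: "q \<in> S" and qv: "\<And>w. w \<in> S \<Longrightarrow> inner q w = inner v w" by blast
    have "inner (y i) v = inner (y i) q" for i using qv[OF yS[of i]] by (simp add: inner_commute)
    moreover have "inner p v = f q" using pf[OF qS] qv[OF pS] by (simp add: inner_commute)
    ultimately show ?thesis using flim[OF qS] by simp
  qed
  then have "weakly_conv (x \<circ> d) p" by (simp add: weakly_conv_def y_def)
  then show ?thesis using dmono by blast
qed

lemma inner_quad_lb: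
  fixes w u :: "'a::real_inner"
  assumes "\<sigma> > 0"
  shows "- (norm w)\<^sup>2 / (4 * \<sigma>) \<le> inner w u + \<sigma> * (norm u)\<^sup>2"
proof -
  have "0 \<le> (norm (w + (2 * \<sigma>) *\<^sub>R u))\<^sup>2" by simp
  also have "\<dots> = (norm w)\<^sup>2 + 4 * \<sigma> * inner w u + 4 * \<sigma>\<^sup>2 * (norm u)\<^sup>2"
  proof -
    have e1: "(norm ((2 * \<sigma>) *\<^sub>R u))\<^sup>2 = 4 * \<sigma>\<^sup>2 * (norm u)\<^sup>2" by (simp add: power_mult_distrib)
    have e2: "inner w ((2 * \<sigma>) *\<^sub>R u) = 2 * \<sigma> * inner w u" by simp
    show ?thesis using norm_add_sq[of w "(2 * \<sigma>) *\<^sub>R u"] e1 e2 by simp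
  qed
  finally have "0 \<le> (norm w)\<^sup>2 + 4 * \<sigma> * (inner w u + \<sigma> * (norm u)\<^sup>2)"
    by (simp add: algebra_simps power2_eq_square)
  then show ?thesis using assms by (simp add: field_simps)
qed

locale sconv =
  fixes R :: "'a::{real_inner,complete_space} \<Rightarrow> ereal" and \<sigma> :: real and x0 \<xi>0 :: 'a
  assumes proper: "proper_fun R" and lsc: "lsc_fun R" and sig: "\<sigma> > 0"
    and sc: "strongly_convex R \<sigma>" and xi0: "\<xi>0 \<in> subdiff R x0"
begin

definition Rr where "Rr z = real_of_ereal (R z)"

lemma fin: "R z \<noteq> \<infinity> \<Longrightarrow> R z = ereal (Rr z)"
  using proper unfolding proper_fun_def Rr_def by (cases "R z") auto

lemma x0fin: "R x0 \<noteq> \<infinity>" using xi0 by (simp add: subdiff_def)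

lemma subdiff_real:
  assumes "\<xi> \<in> subdiff R x" "R z \<noteq> \<infinity>"
  shows "R x \<noteq> \<infinity>" "Rr x + inner \<xi> (z - x) \<le> Rr z"
proof -
  show xf: "R x \<noteq> \<infinity>" using assms by (simp add: subdiff_def)
  have "R x + ereal (inner \<xi> (z - x)) \<le> R z" using assms by (simp add: subdiff_def)
  then show "Rr x + inner \<xi> (z - x) \<le> Rr z" using fin[OF xf] fin[OF assms(2)] by (metis plus_ereal.simps(1) ereal_less_eq(3))
qed

lemma sconv_real:
  assumes a: "R a \<noteq> \<infinity>" and b: "R b \<noteq> \<infinity>" and t: "0 \<le> t" "t \<le> 1"
  shows "R (t *\<^sub>R a + (1 - t) *\<^sub>R b) \<noteq> \<infinity>"
    "Rr (t *\<^sub>R a + (1 - t) *\<^sub>R b) + \<sigma> * t * (1 - t) * (norm (a - b))\<^sup>2 \<le> t * Rr a + (1 - t) * Rr b"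
proof -
  define p where "p = t *\<^sub>R a + (1 - t) *\<^sub>R b"
  have "R p + ereal (\<sigma> * t * (1 - t) * (norm (a - b))\<^sup>2) \<le> ereal t * R a + ereal (1 - t) * R b"
    using sc a b t unfolding strongly_convex_def p_def by blast
  also have "\<dots> = ereal (t * Rr a + (1 - t) * Rr b)" by (subst fin[OF a], subst fin[OF b]) simp
  finally have h: "R p + ereal (\<sigma> * t * (1 - t) * (norm (a - b))\<^sup>2) \<le> ereal (t * Rr a + (1 - t) * Rr b)" .
  show pf: "R (t *\<^sub>R a + (1 - t) *\<^sub>R b) \<noteq> \<infinity>"
    using h by (auto simp: p_def)
  show "Rr (t *\<^sub>R a + (1 - t) *\<^sub>R b) + \<sigma> * t * (1 - t) * (norm (a - b))\<^sup>2 \<le> t * Rr a + (1 - t) * Rr b"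
    using h fin[OF pf] by (simp add: p_def)
qed

lemma growth:
  assumes xi: "\<xi> \<in> subdiff R x" and zf: "R z \<noteq> \<infinity>"
  shows "Rr x + inner \<xi> (z - x) + \<sigma> * (norm (z - x))\<^sup>2 \<le> Rr z"
proof -
  have xf: "R x \<noteq> \<infinity>" using subdiff_real[OF xi zf] by simp
  define d where "d = (norm (z - x))\<^sup>2"
  have key: "inner \<xi> (z - x) + \<sigma> * (1 - t) * d \<le> Rr z - Rr x" if t: "0 < t" "t \<le> 1" for t
  proof -
    define p where "p = t *\<^sub>R z + (1 - t) *\<^sub>R x"
    have pf: "R p \<noteq> \<infinity>" and h1: "Rr p + \<sigma> * t * (1 - t) * d \<le> t * Rr z + (1 - t) * Rr x"
      using sconv_real[OF zf xf, of t] t by (auto simp: p_def d_def)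
    have "p - x = t *\<^sub>R (z - x)" by (simp add: p_def algebra_simps)
    then have h2: "Rr x + t * inner \<xi> (z - x) \<le> Rr p" using subdiff_real(2)[OF xi pf] by simp
    have "t * (inner \<xi> (z - x) + \<sigma> * (1 - t) * d) \<le> t * (Rr z - Rr x)"
      using h1 h2 by (simp add: algebra_simps)
    then show ?thesis using t by simp
  qed
  show ?thesis
  proof (rule ccontr)
    assume "\<not> ?thesis"
    then have G: "Rr z - Rr x < inner \<xi> (z - x) + \<sigma> * d" by (simp add: d_def)
    define G where "G = inner \<xi> (z - x) + \<sigma> * d - (Rr z - Rr x)"
    have G0: "G > 0" using G by (simp add: G_def)
    have sd: "\<sigma> * d \<ge> 0" using sig by (simp add: d_def)
    show False
    proof (cases "G / (\<sigma> * d + 1) \<le> 1")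
      case True
      define t where "t = G / (\<sigma> * d + 1)"
      have t0: "0 < t" using G0 sd by (simp add: t_def)
      have "G \<le> \<sigma> * t * d" using key[OF t0 True[folded t_def]] by (simp add: G_def algebra_simps)
      also have "\<sigma> * t * d = G * (\<sigma> * d / (\<sigma> * d + 1))" using sd by (simp add: t_def field_simps)
      also have "\<dots> < G * 1" using G0 sd by (intro mult_strict_left_mono) (auto simp: field_simps)
      finally show False by simp
    next
      case False
      have "G \<le> \<sigma> * d" using key[of 1] by (simp add: G_def)
      moreover have "\<sigma> * d + 1 < G" using False sd by (simp add: field_simps)
      ultimately show False by simp
    qed
  qed
qed

lemma min_exists:
  "\<exists>z. R z \<noteq> \<infinity> \<and> (\<forall>w. R w \<noteq> \<infinity> \<longrightarrow> Rr z - inner \<xi> z \<le> Rr w - inner \<xi> w)"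
proof -
  define C where "C = {z. R z \<noteq> \<infinity>}"
  define \<phi> where "\<phi> z = Rr z - inner \<xi> z" for z
  have "\<exists>z\<in>C. \<forall>w\<in>C. \<phi> z \<le> \<phi> w"
  proof (rule genmin[where B = "Rr x0 - inner \<xi> x0 - (norm (\<xi>0 - \<xi>))\<^sup>2 / (4 * \<sigma>)" and c = "\<sigma> / 4"])
    show "x0 \<in> C" using x0fin by (simp add: C_def)
    show "\<sigma> / 4 > 0" using sig by simp
    have midr: "(1/2) *\<^sub>R (a + b) = (1/2) *\<^sub>R a + (1 - 1/2) *\<^sub>R b" for a b :: 'a by (simp add: algebra_simps)
    show "(1/2) *\<^sub>R (a + b) \<in> C" if "a \<in> C" "b \<in> C" for a b
      using sconv_real(1)[of a b "1/2"] that by (simp add: C_def midr)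
    show "Rr x0 - inner \<xi> x0 - (norm (\<xi>0 - \<xi>))\<^sup>2 / (4 * \<sigma>) \<le> \<phi> z" if "z \<in> C" for z
    proof -
      have g: "Rr x0 + inner \<xi>0 (z - x0) + \<sigma> * (norm (z - x0))\<^sup>2 \<le> Rr z"
        using growth[OF xi0] that by (simp add: C_def)
      have "- (norm (\<xi>0 - \<xi>))\<^sup>2 / (4 * \<sigma>) \<le> inner (\<xi>0 - \<xi>) (z - x0) + \<sigma> * (norm (z - x0))\<^sup>2"
        by (rule inner_quad_lb[OF sig])
      moreover have "inner \<xi> z = inner \<xi> (z - x0) + inner \<xi> x0" by (simp add: inner_diff_right)
      ultimately show ?thesis using g unfolding \<phi>_def by (simp add: inner_diff_left)
    qed
    show "2 * \<phi> ((1/2) *\<^sub>R (a + b)) + 2 * (\<sigma> / 4) * (norm (a - b))\<^sup>2 \<le> \<phi> a + \<phi> b"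
      if "a \<in> C" "b \<in> C" for a b
    proof -
      have h: "Rr ((1/2) *\<^sub>R (a + b)) + \<sigma> * (1/2) * (1 - 1/2) * (norm (a - b))\<^sup>2 \<le> (1/2) * Rr a + (1 - 1/2) * Rr b"
        using sconv_real(2)[of a b "1/2"] that by (simp add: C_def midr)
      have "inner \<xi> ((1/2) *\<^sub>R (a + b)) = (1/2) * inner \<xi> a + (1/2) * inner \<xi> b"
        by (simp add: inner_add_right)
      then show ?thesis using h unfolding \<phi>_def by (simp add: algebra_simps)
    qed
    show "l \<in> C \<and> \<phi> l \<le> v" if zC: "\<forall>n. z n \<in> C" and zl: "z \<longlonglongrightarrow> l" and pv: "(\<lambda>n. \<phi> (z n)) \<longlonglongrightarrow> v" for z l v
    proof -
      have "(\<lambda>n. \<phi> (z n) + inner \<xi> (z n)) \<longlonglongrightarrow> v + inner \<xi> l"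
        by (intro tendsto_add pv tendsto_inner tendsto_const zl)
      then have "(\<lambda>n. Rr (z n)) \<longlonglongrightarrow> v + inner \<xi> l" by (simp add: \<phi>_def)
      then have "(\<lambda>n. ereal (Rr (z n))) \<longlonglongrightarrow> ereal (v + inner \<xi> l)" by (rule tendsto_ereal)
      moreover have "(\<lambda>n. ereal (Rr (z n))) = (\<lambda>n. R (z n))" using zC fin by (auto simp: C_def)
      ultimately have "liminf (\<lambda>n. R (z n)) = ereal (v + inner \<xi> l)"
        by (simp add: lim_imp_Liminf)
      then have "R l \<le> ereal (v + inner \<xi> l)" using lsc zl unfolding lsc_fun_def by metis
      moreover have lf: "R l \<noteq> \<infinity>" using calculation by auto
      ultimately have "Rr l \<le> v + inner \<xi> l" using fin[OF lf] by simp
      then show ?thesis using lf by (simp add: C_def \<phi>_def)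
    qed
  qed
  then show ?thesis by (auto simp: C_def \<phi>_def)
qed

lemma gc_eq:
  assumes xi: "\<xi> \<in> subdiff R x"
  shows "grad_conj R \<xi> = x"
  unfolding grad_conj_def
proof (rule the_equality)
  have xf: "R x \<noteq> \<infinity>" using xi by (simp add: subdiff_def)
  show "\<forall>z. R x - ereal (inner \<xi> x) \<le> R z - ereal (inner \<xi> z)"
  proof
    fix z show "R x - ereal (inner \<xi> x) \<le> R z - ereal (inner \<xi> z)"
    proof (cases "R z = \<infinity>")
      case True then show ?thesis by simp
    next
      case False
      have "Rr x + inner \<xi> (z - x) \<le> Rr z" using subdiff_real[OF xi False] by simp
      then show ?thesis using fin[OF xf] fin[OF False] by (simp add: inner_diff_right)
    qed
  qed
  fix x' assume P: "\<forall>z. R x' - ereal (inner \<xi> x') \<le> R z - ereal (inner \<xi> z)"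
  have x'f: "R x' \<noteq> \<infinity>"
  proof
    assume "R x' = \<infinity>"
    moreover have "R x' - ereal (inner \<xi> x') \<le> R x - ereal (inner \<xi> x)" using P by blast
    ultimately show False using fin[OF xf] by simp
  qed
  have xi': "\<xi> \<in> subdiff R x'"
    unfolding subdiff_def
  proof (intro CollectI conjI allI x'f)
    fix z show "R x' + ereal (inner \<xi> (z - x')) \<le> R z"
    proof (cases "R z = \<infinity>")
      case True then show ?thesis by simp
    next
      case False
      have "R x' - ereal (inner \<xi> x') \<le> R z - ereal (inner \<xi> z)" using P by blast
      then have "Rr x' - inner \<xi> x' \<le> Rr z - inner \<xi> z" using fin[OF x'f] fin[OF False] by (metis ereal_minus(1) ereal_less_eq(3))
      then show ?thesis using fin[OF x'f] fin[OF False] by (simp add: inner_diff_right)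
    qed
  qed
  have g1: "Rr x + inner \<xi> (x' - x) + \<sigma> * (norm (x' - x))\<^sup>2 \<le> Rr x'" by (rule growth[OF xi x'f])
  have g2: "Rr x' + inner \<xi> (x - x') + \<sigma> * (norm (x - x'))\<^sup>2 \<le> Rr x" by (rule growth[OF xi' xf])
  have "inner \<xi> (x - x') = - inner \<xi> (x' - x)" by (simp add: inner_diff_right)
  moreover have "norm (x - x') = norm (x' - x)" by (rule norm_minus_commute)
  ultimately have "2 * \<sigma> * (norm (x' - x))\<^sup>2 \<le> 0" using g1 g2 by simp
  then have "(norm (x' - x))\<^sup>2 \<le> 0" using sig by (simp add: mult_le_0_iff)
  then show "x' = x" by simp
qed

lemma gc:
  shows "R (grad_conj R \<xi>) \<noteq> \<infinity>" "\<xi> \<in> subdiff R (grad_conj R \<xi>)"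
proof -
  obtain z where zf: "R z \<noteq> \<infinity>" and zm: "\<And>w. R w \<noteq> \<infinity> \<Longrightarrow> Rr z - inner \<xi> z \<le> Rr w - inner \<xi> w"
    using min_exists[of \<xi>] by blast
  have xi: "\<xi> \<in> subdiff R z"
    unfolding subdiff_def
  proof (intro CollectI conjI allI zf)
    fix w show "R z + ereal (inner \<xi> (w - z)) \<le> R w"
    proof (cases "R w = \<infinity>")
      case True then show ?thesis by simp
    next
      case False then show ?thesis using zm[OF False] fin[OF zf] fin[OF False] by (simp add: inner_diff_right)
    qed
  qed
  then show "\<xi> \<in> subdiff R (grad_conj R \<xi>)" using gc_eq by simp
  show "R (grad_conj R \<xi>) \<noteq> \<infinity>" using gc_eq[OF xi] zf by simp
qed

lemma breg_step:
  fixes \<xi> \<xi>' :: 'a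
  defines "x \<equiv> grad_conj R \<xi>" and "x' \<equiv> grad_conj R \<xi>'"
  shows "Rr x - Rr x' - inner \<xi>' (x - x') \<le> (norm (\<xi>' - \<xi>))\<^sup>2 / (4 * \<sigma>)"
proof -
  have g: "Rr x + inner \<xi> (x' - x) + \<sigma> * (norm (x' - x))\<^sup>2 \<le> Rr x'"
    using growth[OF gc(2)[of \<xi>] gc(1)[of \<xi>']] by (simp add: x_def x'_def)
  have q: "- (norm (\<xi> - \<xi>'))\<^sup>2 / (4 * \<sigma>) \<le> inner (\<xi> - \<xi>') (x' - x) + \<sigma> * (norm (x' - x))\<^sup>2"
    by (rule inner_quad_lb[OF sig])
  have "norm (\<xi> - \<xi>') = norm (\<xi>' - \<xi>)" by (rule norm_minus_commute)
  moreover have "inner \<xi>' (x - x') = - inner \<xi>' (x' - x)" by (simp add: inner_diff_right)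
  ultimately show ?thesis using g q by (simp add: inner_diff_left)
qed

end

lemma beta_prop:
  fixes g m :: "'a::real_inner" and \<alpha> \<gamma> \<sigma> :: real and \<beta> :: ereal
  assumes sig: "\<sigma> > 0" and bet: "\<beta> > 0"
  defines "b \<equiv> step_beta \<beta> \<sigma> \<alpha> \<gamma> g m"
  shows "0 \<le> b" "(norm (b *\<^sub>R m - \<alpha> *\<^sub>R g))\<^sup>2 / (4 * \<sigma>) + b * \<gamma> \<le> \<alpha>\<^sup>2 * (norm g)\<^sup>2 / (4 * \<sigma>)"
proof -
  define t where "t = (\<alpha> * inner g m - 2 * \<sigma> * \<gamma>) / (norm m)\<^sup>2"
  have bfin: "\<beta> \<noteq> \<infinity> \<Longrightarrow> real_of_ereal \<beta> > 0" using bet by (cases \<beta>) auto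
  have bcases: "m = 0 \<and> b = 0 \<or> m \<noteq> 0 \<and> (b = 0 \<or> (0 < b \<and> b \<le> t))"
  proof (cases "m = 0")
    case True then show ?thesis by (simp add: b_def step_beta_def)
  next
    case False
    have "b = max 0 t \<or> b = min (max 0 t) (real_of_ereal \<beta>) \<and> real_of_ereal \<beta> > 0"
      using False bfin by (auto simp: b_def step_beta_def t_def Let_def)
    then show ?thesis using False by (auto simp: min_def max_def split: if_splits)
  qed
  then show "0 \<le> b" by auto
  have expand: "(norm (b *\<^sub>R m - \<alpha> *\<^sub>R g))\<^sup>2 = b\<^sup>2 * (norm m)\<^sup>2 - 2 * b * \<alpha> * inner g m + \<alpha>\<^sup>2 * (norm g)\<^sup>2"
    by (simp add: norm_diff_sq power_mult_distrib inner_commute)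
  have "b\<^sup>2 * (norm m)\<^sup>2 - 2 * b * \<alpha> * inner g m + 4 * \<sigma> * (b * \<gamma>) \<le> 0"
  proof -
    from bcases consider "b = 0" | "m \<noteq> 0" "0 < b" "b \<le> t" by blast
    then show ?thesis
    proof cases
      case 1 then show ?thesis by simp
    next
      case 2
      have nm: "(norm m)\<^sup>2 > 0" using 2 by simp
      have tt: "t * (norm m)\<^sup>2 = \<alpha> * inner g m - 2 * \<sigma> * \<gamma>" using nm by (simp add: t_def)
      have "b\<^sup>2 * (norm m)\<^sup>2 - 2 * b * \<alpha> * inner g m + 4 * \<sigma> * (b * \<gamma>) = b * (norm m)\<^sup>2 * (b - 2 * t)"
      proof -
        have "2 * b * (t * (norm m)\<^sup>2) = 2 * b * (\<alpha> * inner g m - 2 * \<sigma> * \<gamma>)" using tt by simp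
        then show ?thesis by (simp add: algebra_simps power2_eq_square)
      qed
      also have "\<dots> \<le> 0" using 2 nm by (intro mult_nonneg_nonpos) auto
      finally show ?thesis .
    qed
  qed
  then have Q: "(b\<^sup>2 * (norm m)\<^sup>2 - 2 * b * \<alpha> * inner g m + 4 * \<sigma> * (b * \<gamma>)) / (4 * \<sigma>) \<le> 0"
    using sig by (simp add: divide_nonpos_pos)
  have "(norm (b *\<^sub>R m - \<alpha> *\<^sub>R g))\<^sup>2 / (4 * \<sigma>) + b * \<gamma> = \<alpha>\<^sup>2 * (norm g)\<^sup>2 / (4 * \<sigma>) + (b\<^sup>2 * (norm m)\<^sup>2 - 2 * b * \<alpha> * inner g m + 4 * \<sigma> * (b * \<gamma>)) / (4 * \<sigma>)"
    unfolding expand using sig by (simp add: field_simps)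
  then show "(norm (b *\<^sub>R m - \<alpha> *\<^sub>R g))\<^sup>2 / (4 * \<sigma>) + b * \<gamma> \<le> \<alpha>\<^sup>2 * (norm g)\<^sup>2 / (4 * \<sigma>)"
    using Q by linarith
qed


locale run = sconv R \<sigma> x0 \<xi>0 for R :: "'a::{real_inner,complete_space} \<Rightarrow> ereal" and \<sigma> x0 \<xi>0 +
  fixes F :: "'a \<Rightarrow> 'b::real_inner" and Lop :: "'a \<Rightarrow> ('a \<Rightarrow>\<^sub>L 'b)"
    and \<eta> Lc :: real and adaptive :: bool and \<mu>0 \<mu>1 :: real and \<beta> :: ereal
    and \<rho> :: real and xb :: 'a and y yd :: 'b and \<delta> \<tau> :: real
  assumes rho: "\<rho> > 0"
    and xbF: "F xb = y" and xbB: "bregman R \<xi>0 xb x0 \<le> ereal (\<sigma> * \<rho>\<^sup>2)"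
    and tcc: "\<And>x x'. x \<in> cball x0 (2 * \<rho>) \<Longrightarrow> x' \<in> cball x0 (2 * \<rho>) \<Longrightarrow>
               norm (F x - F x' - blinfun_apply (Lop x') (x - x')) \<le> \<eta> * norm (F x - F x')"
    and eta: "0 \<le> \<eta>" "\<eta> < 1" and Lc: "Lc > 0"
    and Lb: "\<And>x. x \<in> cball x0 (2 * \<rho>) \<Longrightarrow> norm (Lop x) \<le> Lc"
    and tau: "\<tau> > 1" and bet: "\<beta> > 0" and mu0: "\<mu>0 > 0" and mu1: "\<mu>1 > 0"
    and param: "1 - (1 + \<eta>) / \<tau> - \<eta> - \<mu>0 / (4 * \<sigma>) > 0"
    and del: "\<delta> > 0" and noise: "norm (yd - y) \<le> \<delta>"
begin

definition "st n = alg1 R F Lop \<sigma> \<eta> Lc adaptive \<mu>0 \<mu>1 \<beta> \<xi>0 yd \<delta> n"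
definition "xi n = fst (st n)"
definition "xip n = fst (snd (st n))"
definition "gam n = snd (snd (st n))"
definition "X n = grad_conj R (xi n)"
definition "res n = F (X n) - yd"
definition "g n = adjoint (blinfun_apply (Lop (X n))) (res n)"
definition "al n = step_alpha adaptive \<mu>0 \<mu>1 Lc (res n) (g n)"
definition "mm n = xi n - xip n"
definition "bt n = step_beta \<beta> \<sigma> (al n) (gam n) (g n) (mm n)"
definition "D n = Rr xb - Rr (X n) - inner (xi n) (xb - X n)"
definition "cc = 1 - (1 + \<eta>) / \<tau> - \<eta> - \<mu>0 / (4 * \<sigma>)"
definition "amin = min (\<mu>0 / Lc\<^sup>2) \<mu>1"

lemma st0: "xi 0 = \<xi>0" "xip 0 = \<xi>0" "gam 0 = 0"
  by (simp_all add: xi_def xip_def gam_def st_def)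

lemma stS: "xi (Suc n) = xi n - al n *\<^sub>R g n + bt n *\<^sub>R mm n" "xip (Suc n) = xi n"
  "gam (Suc n) = inner (xi (Suc n) - xi n) (X (Suc n) - X n) - (1 - \<eta>) * al n * (norm (res n))\<^sup>2
      + (1 + \<eta>) * al n * \<delta> * norm (res n) + bt n * gam n"
proof -
  obtain a b c where abc: "st n = (a, b, c)" by (cases "st n")
  then have abc': "xi n = a" "xip n = b" "gam n = c" by (simp_all add: xi_def xip_def gam_def)
  have e: "st (Suc n) = (a - al n *\<^sub>R g n + bt n *\<^sub>R mm n, a,
      inner (a - al n *\<^sub>R g n + bt n *\<^sub>R mm n - a) (grad_conj R (a - al n *\<^sub>R g n + bt n *\<^sub>R mm n) - X n)
      - (1 - \<eta>) * al n * (norm (res n))\<^sup>2 + (1 + \<eta>) * al n * \<delta> * norm (res n) + bt n * c)"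
    by (simp add: st_def abc[unfolded st_def] Let_def X_def res_def g_def al_def mm_def bt_def abc')
  show "xi (Suc n) = xi n - al n *\<^sub>R g n + bt n *\<^sub>R mm n" using e abc' by (simp add: xi_def)
  show "xip (Suc n) = xi n" using e abc' by (simp add: xip_def xi_def)
  show "gam (Suc n) = inner (xi (Suc n) - xi n) (X (Suc n) - X n) - (1 - \<eta>) * al n * (norm (res n))\<^sup>2
      + (1 + \<eta>) * al n * \<delta> * norm (res n) + bt n * gam n"
    using e abc' by (simp add: xi_def gam_def X_def)
qed

lemma X0: "X 0 = x0" using gc_eq[OF xi0] by (simp add: X_def st0)

lemma xbfin: "R xb \<noteq> \<infinity>"
proof
  assume "R xb = \<infinity>"
  then have "bregman R \<xi>0 xb x0 = \<infinity>" using fin[OF x0fin] by (simp add: bregman_def)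
  then show False using xbB by simp
qed

lemma D0: "D 0 \<le> \<sigma> * \<rho>\<^sup>2"
proof -
  have "bregman R \<xi>0 xb x0 = ereal (D 0)"
    by (simp add: bregman_def D_def X0 st0 fin[OF xbfin] fin[OF x0fin])
  then show ?thesis using xbB by simp
qed

lemma Dlb: "\<sigma> * (norm (xb - X n))\<^sup>2 \<le> D n"
  using growth[OF gc(2)[of "xi n"] xbfin] by (simp add: D_def X_def)

lemma normle: "\<sigma> * (norm z)\<^sup>2 \<le> \<sigma> * \<rho>\<^sup>2 \<Longrightarrow> norm z \<le> \<rho>"
proof -
  assume "\<sigma> * (norm z)\<^sup>2 \<le> \<sigma> * \<rho>\<^sup>2"
  then have "(norm z)\<^sup>2 \<le> \<rho>\<^sup>2" using sig by simp
  then show "norm z \<le> \<rho>" using power2_le_imp_le[OF _ less_imp_le[OF rho]] by blast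
qed

lemma xb_ball: "norm (xb - x0) \<le> \<rho>"
  using Dlb[of 0] D0 X0 by (intro normle) simp

lemma inball:
  assumes "D n \<le> D 0"
  shows "norm (X n - xb) \<le> \<rho>" "X n \<in> cball x0 (2 * \<rho>)"
proof -
  have "\<sigma> * (norm (xb - X n))\<^sup>2 \<le> \<sigma> * \<rho>\<^sup>2" using Dlb[of n] assms D0 by linarith
  then have "norm (xb - X n) \<le> \<rho>" by (rule normle)
  then show n1: "norm (X n - xb) \<le> \<rho>" by (simp add: norm_minus_commute)
  have "dist x0 (X n) \<le> dist x0 xb + dist xb (X n)" by (rule dist_triangle)
  then have "dist x0 (X n) \<le> norm (X n - xb) + norm (xb - x0)"
    by (simp add: dist_norm norm_minus_commute)
  then show "X n \<in> cball x0 (2 * \<rho>)" using n1 xb_ball by simp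
qed

lemma xb_in: "xb \<in> cball x0 (2 * \<rho>)"
  using xb_ball rho by (simp add: dist_norm norm_minus_commute)

lemma gnorm: "X n \<in> cball x0 (2 * \<rho>) \<Longrightarrow> norm (g n) \<le> Lc * norm (res n)"
proof -
  assume inb: "X n \<in> cball x0 (2 * \<rho>)"
  have "norm (Lop (X n)) * norm (res n) \<le> Lc * norm (res n)" by (rule mult_right_mono[OF Lb[OF inb] norm_ge_zero])
  then show ?thesis unfolding g_def using adjoint_norm[of "Lop (X n)" "res n"] by linarith
qed

lemma ginner:
  assumes inb: "X n \<in> cball x0 (2 * \<rho>)"
  shows "(1 - \<eta>) * (norm (res n))\<^sup>2 - (1 + \<eta>) * \<delta> * norm (res n) \<le> inner (g n) (X n - xb)"
proof -
  define r where "r = res n"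
  define e where "e = F xb - F (X n) - blinfun_apply (Lop (X n)) (xb - X n)"
  have en: "norm e \<le> \<eta> * norm (F xb - F (X n))" unfolding e_def by (rule tcc[OF xb_in inb])
  have "blinfun_apply (Lop (X n)) (X n - xb) = - blinfun_apply (Lop (X n)) (xb - X n)"
    by (metis blinfun.minus_right minus_diff_eq)
  then have L: "blinfun_apply (Lop (X n)) (X n - xb) = e + r + (yd - y)"
    by (simp add: e_def r_def res_def xbF algebra_simps)
  have gi: "inner (g n) (X n - xb) = inner r e + (norm r)\<^sup>2 + inner r (yd - y)"
    by (simp add: g_def adjoint_inner L r_def inner_add_right power2_norm_eq_inner)
  have "norm (F xb - F (X n)) = norm (r + (yd - y))"
    by (simp add: r_def res_def xbF norm_minus_commute algebra_simps)
  also have "\<dots> \<le> norm r + \<delta>" using noise norm_triangle_ineq[of r "yd - y"] by linarith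
  finally have nF: "norm (F xb - F (X n)) \<le> norm r + \<delta>" .
  have "\<eta> * norm (F xb - F (X n)) \<le> \<eta> * (norm r + \<delta>)" by (rule mult_left_mono[OF nF eta(1)])
  then have "norm e \<le> \<eta> * (norm r + \<delta>)" using en by linarith
  then have "norm r * norm e \<le> norm r * (\<eta> * (norm r + \<delta>))" by (simp add: mult_left_mono)
  moreover have "- (norm r * norm e) \<le> inner r e" using Cauchy_Schwarz_ineq2[of r e] by linarith
  moreover have "- (norm r * \<delta>) \<le> inner r (yd - y)"
  proof -
    have "norm r * norm (yd - y) \<le> norm r * \<delta>" using noise by (simp add: mult_left_mono)
    then show ?thesis using Cauchy_Schwarz_ineq2[of r "yd - y"] by linarith
  qed
  moreover have "norm r * (\<eta> * (norm r + \<delta>)) = \<eta> * (norm r)\<^sup>2 + \<eta> * \<delta> * norm r"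
    by (simp add: algebra_simps power2_eq_square)
  moreover have "(1 - \<eta>) * (norm r)\<^sup>2 - (1 + \<eta>) * \<delta> * norm r = (norm r)\<^sup>2 - (\<eta> * (norm r)\<^sup>2 + \<eta> * \<delta> * norm r) - norm r * \<delta>"
    by (simp add: algebra_simps)
  ultimately show ?thesis unfolding gi r_def[symmetric] by linarith
qed

lemma al_nonneg: "0 \<le> al n"
  using mu0 mu1 Lc by (auto simp: al_def step_alpha_def)

lemma al_g: "X n \<in> cball x0 (2 * \<rho>) \<Longrightarrow> al n * (norm (g n))\<^sup>2 \<le> \<mu>0 * (norm (res n))\<^sup>2"
proof -
  assume inb: "X n \<in> cball x0 (2 * \<rho>)"
  have gn: "norm (g n) \<le> Lc * norm (res n)" by (rule gnorm[OF inb])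
  show ?thesis
  proof (cases adaptive)
    case True
    show ?thesis
    proof (cases "g n = 0")
      case True then show ?thesis using mu0 by simp
    next
      case False
      have "al n \<le> \<mu>0 * (norm (res n))\<^sup>2 / (norm (g n))\<^sup>2"
        unfolding al_def step_alpha_def using True False by simp
      then have "al n * (norm (g n))\<^sup>2 \<le> \<mu>0 * (norm (res n))\<^sup>2 / (norm (g n))\<^sup>2 * (norm (g n))\<^sup>2"
        by (rule mult_right_mono) simp
      also have "\<dots> = \<mu>0 * (norm (res n))\<^sup>2" using False by simp
      finally show ?thesis .
    qed
  next
    case False
    have "(norm (g n))\<^sup>2 \<le> (Lc * norm (res n))\<^sup>2" using gn by (simp add: power_mono)
    then have "\<mu>0 / Lc\<^sup>2 * (norm (g n))\<^sup>2 \<le> \<mu>0 / Lc\<^sup>2 * (Lc * norm (res n))\<^sup>2"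
      using mu0 by (intro mult_left_mono) auto
    also have "\<dots> = \<mu>0 * (norm (res n))\<^sup>2" using Lc by (simp add: power_mult_distrib)
    finally show ?thesis using False unfolding al_def step_alpha_def by simp
  qed
qed

lemma al_min: "X n \<in> cball x0 (2 * \<rho>) \<Longrightarrow> amin \<le> al n"
proof -
  assume inb: "X n \<in> cball x0 (2 * \<rho>)"
  have gn: "norm (g n) \<le> Lc * norm (res n)" by (rule gnorm[OF inb])
  show ?thesis
  proof (cases adaptive)
    case False then show ?thesis unfolding al_def step_alpha_def amin_def by simp
  next
    case True
    show ?thesis
    proof (cases "g n = 0")
      case True then show ?thesis using \<open>adaptive\<close> unfolding al_def step_alpha_def amin_def by simp
    next
      case False
      have gp: "0 < norm (g n)" using False by simp
      have "(norm (g n))\<^sup>2 \<le> (Lc * norm (res n))\<^sup>2" using gn by (simp add: power_mono)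
      moreover have rp: "0 < norm (res n)" using gp gn Lc
        by (metis le_less_trans mult_eq_0_iff mult_le_0_iff norm_ge_zero not_less order.not_eq_order_implies_strict)
      ultimately have "\<mu>0 * (norm (res n))\<^sup>2 / (Lc * norm (res n))\<^sup>2 \<le> \<mu>0 * (norm (res n))\<^sup>2 / (norm (g n))\<^sup>2"
        using gp mu0 Lc by (intro divide_left_mono) auto
      moreover have "\<mu>0 * (norm (res n))\<^sup>2 / (Lc * norm (res n))\<^sup>2 = \<mu>0 / Lc\<^sup>2" using rp by (simp add: power_mult_distrib)
      ultimately have "\<mu>0 / Lc\<^sup>2 \<le> \<mu>0 * (norm (res n))\<^sup>2 / (norm (g n))\<^sup>2" by simp
      then show ?thesis using True False unfolding al_def step_alpha_def amin_def by (simp add: min.coboundedI1)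
    qed
  qed
qed

lemma amin_pos: "amin > 0" using mu0 mu1 Lc by (simp add: amin_def)

lemma step:
  assumes inb: "X n \<in> cball x0 (2 * \<rho>)" and IHg: "inner (mm n) (X n - xb) \<le> gam n"
  shows "inner (mm (Suc n)) (X (Suc n) - xb) \<le> gam (Suc n)"
    "\<tau> * \<delta> < norm (res n) \<Longrightarrow> D (Suc n) \<le> D n - cc * (al n * (norm (res n))\<^sup>2)"
proof -
  define a where "a = al n"
  define r where "r = norm (res n)"
  define b where "b = bt n"
  define d where "d = xi (Suc n) - xi n"
  have a0: "0 \<le> a" using al_nonneg by (simp add: a_def)
  have b0: "0 \<le> b" using beta_prop(1)[OF sig bet] by (simp add: b_def bt_def)
  have r0: "0 \<le> r" by (simp add: r_def)
  have d_eq: "d = b *\<^sub>R mm n - a *\<^sub>R g n" by (simp add: d_def stS a_def b_def)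
  have gi: "(1 - \<eta>) * r\<^sup>2 - (1 + \<eta>) * \<delta> * r \<le> inner (g n) (X n - xb)"
    using ginner[OF inb] by (simp add: r_def)
  have "b * inner (mm n) (X n - xb) \<le> b * gam n" by (rule mult_left_mono[OF IHg b0])
  moreover have "a * ((1 - \<eta>) * r\<^sup>2 - (1 + \<eta>) * \<delta> * r) \<le> a * inner (g n) (X n - xb)" by (rule mult_left_mono[OF gi a0])
  moreover have "inner d (X n - xb) = b * inner (mm n) (X n - xb) - a * inner (g n) (X n - xb)"
    by (simp add: d_eq inner_diff_left)
  ultimately have dx: "inner d (X n - xb) \<le> b * gam n - a * ((1 - \<eta>) * r\<^sup>2 - (1 + \<eta>) * \<delta> * r)" by linarith
  have mmS: "mm (Suc n) = d" by (simp add: mm_def d_def stS)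
  show "inner (mm (Suc n)) (X (Suc n) - xb) \<le> gam (Suc n)"
  proof -
    have "inner (mm (Suc n)) (X (Suc n) - xb) = inner d (X (Suc n) - X n) + inner d (X n - xb)"
      by (simp add: mmS inner_diff_right)
    also have "\<dots> \<le> inner d (X (Suc n) - X n) + (b * gam n - a * ((1 - \<eta>) * r\<^sup>2 - (1 + \<eta>) * \<delta> * r))"
      using dx by linarith
    also have "\<dots> = gam (Suc n)" by (simp add: stS(3)[of n] d_def a_def b_def r_def algebra_simps)
    finally show ?thesis .
  qed
  assume H: "\<tau> * \<delta> < norm (res n)"
  have three: "D (Suc n) - D n = (Rr (X n) - Rr (X (Suc n)) - inner (xi (Suc n)) (X n - X (Suc n))) + inner d (X n - xb)"
    by (simp add: D_def d_def inner_diff_left inner_diff_right algebra_simps)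
  have bs: "Rr (X n) - Rr (X (Suc n)) - inner (xi (Suc n)) (X n - X (Suc n)) \<le> (norm d)\<^sup>2 / (4 * \<sigma>)"
    using breg_step[of "xi n" "xi (Suc n)"] by (simp add: X_def d_def)
  have bp: "(norm d)\<^sup>2 / (4 * \<sigma>) + b * gam n \<le> a\<^sup>2 * (norm (g n))\<^sup>2 / (4 * \<sigma>)"
    using beta_prop(2)[OF sig bet, of "al n" "gam n" "g n" "mm n"] by (simp add: d_eq a_def b_def bt_def)
  have "a * (a * (norm (g n))\<^sup>2) \<le> a * (\<mu>0 * r\<^sup>2)"
    using mult_left_mono[OF al_g[OF inb] a0] by (simp add: a_def r_def)
  then have ag: "a\<^sup>2 * (norm (g n))\<^sup>2 / (4 * \<sigma>) \<le> a * (\<mu>0 * r\<^sup>2) / (4 * \<sigma>)"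
    using sig by (intro divide_right_mono) (auto simp: power2_eq_square mult_ac)
  have dr: "\<delta> * r \<le> r\<^sup>2 / \<tau>"
  proof -
    have "\<delta> \<le> r / \<tau>" using H tau by (simp add: r_def field_simps)
    then have "\<delta> * r \<le> r / \<tau> * r" by (rule mult_right_mono[OF _ r0])
    then show ?thesis by (simp add: power2_eq_square)
  qed
  have "a * ((1 + \<eta>) * (\<delta> * r)) \<le> a * ((1 + \<eta>) * (r\<^sup>2 / \<tau>))"
    using eta a0 dr by (intro mult_left_mono) auto
  then have dr2: "(1 + \<eta>) * \<delta> * r * a \<le> (1 + \<eta>) * (r\<^sup>2 / \<tau>) * a" by (simp add: mult_ac)
  have ccexp: "cc * (a * r\<^sup>2) = a * r\<^sup>2 - (1 + \<eta>) * (r\<^sup>2 / \<tau>) * a - \<eta> * (a * r\<^sup>2) - a * (\<mu>0 * r\<^sup>2) / (4 * \<sigma>)"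
    by (simp add: cc_def algebra_simps)
  have exp2: "a * ((1 - \<eta>) * r\<^sup>2 - (1 + \<eta>) * \<delta> * r) = a * r\<^sup>2 - \<eta> * (a * r\<^sup>2) - (1 + \<eta>) * \<delta> * r * a"
    by (simp add: algebra_simps)
  show "D (Suc n) \<le> D n - cc * (al n * (norm (res n))\<^sup>2)"
    using three bs bp ag dx dr2 ccexp exp2 unfolding a_def[symmetric] r_def[symmetric] by linarith
qed

lemma cc_pos: "cc > 0" using param by (simp add: cc_def)

lemma main_ind:
  "(\<forall>j<n. \<tau> * \<delta> < norm (res j)) \<Longrightarrow>
     D n + cc * (\<Sum>j<n. al j * (norm (res j))\<^sup>2) \<le> D 0 \<and> inner (mm n) (X n - xb) \<le> gam n"
proof (induction n)
  case 0
  show ?case by (simp add: mm_def st0)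
next
  case (Suc n)
  then have IH: "D n + cc * (\<Sum>j<n. al j * (norm (res j))\<^sup>2) \<le> D 0" "inner (mm n) (X n - xb) \<le> gam n" by auto
  have "0 \<le> (\<Sum>j<n. al j * (norm (res j))\<^sup>2)" by (intro sum_nonneg mult_nonneg_nonneg al_nonneg) auto
  then have "0 \<le> cc * (\<Sum>j<n. al j * (norm (res j))\<^sup>2)" using cc_pos by simp
  then have "D n \<le> D 0" using IH by linarith
  then have inb: "X n \<in> cball x0 (2 * \<rho>)" by (rule inball)
  have H: "\<tau> * \<delta> < norm (res n)" using Suc.prems by simp
  have s1: "D (Suc n) \<le> D n - cc * (al n * (norm (res n))\<^sup>2)" by (rule step(2)[OF inb IH(2) H])
  have s2: "inner (mm (Suc n)) (X (Suc n) - xb) \<le> gam (Suc n)" by (rule step(1)[OF inb IH(2)])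
  have "cc * (\<Sum>j<Suc n. al j * (norm (res j))\<^sup>2) = cc * (\<Sum>j<n. al j * (norm (res j))\<^sup>2) + cc * (al n * (norm (res n))\<^sup>2)"
    by (simp add: algebra_simps)
  then show ?case using s1 s2 IH(1) by linarith
qed

lemma D_bound: "(\<forall>j<n. \<tau> * \<delta> < norm (res j)) \<Longrightarrow> D n \<le> D 0"
proof -
  assume h: "\<forall>j<n. \<tau> * \<delta> < norm (res j)"
  have "0 \<le> (\<Sum>j<n. al j * (norm (res j))\<^sup>2)" by (intro sum_nonneg mult_nonneg_nonneg al_nonneg) auto
  then have "0 \<le> cc * (\<Sum>j<n. al j * (norm (res j))\<^sup>2)" using cc_pos by simp
  then show ?thesis using main_ind[OF h] by linarith
qed

lemma stop_ex: "\<exists>n. norm (res n) \<le> \<tau> * \<delta>"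
proof (rule ccontr)
  assume "\<not> ?thesis"
  then have all: "\<And>n. \<tau> * \<delta> < norm (res n)" by (simp add: not_le)
  define q where "q = amin * (\<tau> * \<delta>)\<^sup>2"
  have q0: "q > 0" using amin_pos tau del by (simp add: q_def)
  have "real n * (cc * q) \<le> D 0" for n
  proof -
    have tm: "q \<le> al j * (norm (res j))\<^sup>2" for j
    proof -
      have "X j \<in> cball x0 (2 * \<rho>)" using D_bound[of j] all by (intro inball) auto
      then have "amin \<le> al j" by (rule al_min)
      moreover have "(\<tau> * \<delta>)\<^sup>2 \<le> (norm (res j))\<^sup>2"
        using all[of j] tau del by (intro power_mono) auto
      ultimately show ?thesis unfolding q_def using amin_pos by (intro mult_mono) auto
    qed
    have "real n * q \<le> (\<Sum>j<n. al j * (norm (res j))\<^sup>2)"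
      using sum_mono[of "{..<n}" "\<lambda>j. q" "\<lambda>j. al j * (norm (res j))\<^sup>2"] tm by simp
    then have "cc * (real n * q) \<le> cc * (\<Sum>j<n. al j * (norm (res j))\<^sup>2)" using cc_pos by simp
    moreover have "0 \<le> D n" using Dlb[of n] sig by (meson mult_nonneg_nonneg less_imp_le zero_le_power2 order_trans)
    ultimately show ?thesis using main_ind[of n] all by (simp add: mult_ac)
  qed
  moreover obtain n :: nat where "D 0 / (cc * q) < n" using reals_Archimedean2 by blast
  then have "D 0 < real n * (cc * q)" using cc_pos q0 by (simp add: field_simps)
  ultimately show False by (meson not_le)
qed

definition "NN = (LEAST n. norm (res n) \<le> \<tau> * \<delta>)"

lemma NN_props: "norm (res NN) \<le> \<tau> * \<delta>" "\<And>j. j < NN \<Longrightarrow> \<tau> * \<delta> < norm (res j)"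
proof -
  show "norm (res NN) \<le> \<tau> * \<delta>" unfolding NN_def using stop_ex by (rule LeastI_ex)
  show "\<tau> * \<delta> < norm (res j)" if "j < NN" for j
    using not_less_Least[OF that[unfolded NN_def]] by (simp add: not_le)
qed

lemma NN_eq: "alg1_stop R F Lop \<sigma> \<eta> Lc adaptive \<mu>0 \<mu>1 \<beta> \<xi>0 yd \<delta> \<tau> = NN"
  by (simp add: alg1_stop_def NN_def res_def X_def xi_def st_def alg1_x_def)

lemma X_eq: "alg1_x R F Lop \<sigma> \<eta> Lc adaptive \<mu>0 \<mu>1 \<beta> \<xi>0 yd \<delta> n = X n"
  by (simp add: X_def xi_def st_def alg1_x_def)

lemma final:
  "norm (F (X NN) - yd) \<le> \<tau> * \<delta>" "norm (X NN - xb) \<le> \<rho>" "X NN \<in> cball x0 (2 * \<rho>)"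
proof -
  show "norm (F (X NN) - yd) \<le> \<tau> * \<delta>" using NN_props(1) by (simp add: res_def)
  have "D NN \<le> D 0" using D_bound NN_props(2) by blast
  then show "norm (X NN - xb) \<le> \<rho>" "X NN \<in> cball x0 (2 * \<rho>)" using inball by auto
qed

lemma quad_gc:
  assumes Rq: "R = (\<lambda>x. ereal ((norm x)\<^sup>2 / 2))"
  shows "grad_conj R \<xi> = \<xi>"
proof (rule gc_eq)
  show "\<xi> \<in> subdiff R \<xi>"
    unfolding subdiff_def Rq
  proof (intro CollectI conjI allI)
    fix z
    have "0 \<le> (norm (z - \<xi>))\<^sup>2" by simp
    then have "0 \<le> (norm z)\<^sup>2 - 2 * inner z \<xi> + (norm \<xi>)\<^sup>2" by (simp add: norm_diff_sq)
    moreover have "inner \<xi> (z - \<xi>) = inner z \<xi> - (norm \<xi>)\<^sup>2"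
      by (simp add: inner_diff_right inner_commute power2_norm_eq_inner)
    ultimately have "(norm \<xi>)\<^sup>2 / 2 + inner \<xi> (z - \<xi>) \<le> (norm z)\<^sup>2 / 2" by linarith
    then show "ereal ((norm \<xi>)\<^sup>2 / 2) + ereal (inner \<xi> (z - \<xi>)) \<le> ereal ((norm z)\<^sup>2 / 2)" by simp
  qed simp
qed

lemma quad_orth:
  assumes Rq: "R = (\<lambda>x. ereal ((norm x)\<^sup>2 / 2))"
    and ker: "\<And>x. x \<in> cball x0 (2 * \<rho>) \<Longrightarrow> blinfun_apply (Lop x) v = 0"
  shows "(\<forall>j<n. \<tau> * \<delta> < norm (res j)) \<Longrightarrow> inner (xi n - x0) v = 0 \<and> inner (xip n - x0) v = 0"
proof (induction n)
  case 0
  have "x0 = \<xi>0" using gc_eq[OF xi0] quad_gc[OF Rq, of \<xi>0] by simp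
  then show ?case by (simp add: st0)
next
  case (Suc n)
  then have IH: "inner (xi n - x0) v = 0" "inner (xip n - x0) v = 0" by auto
  have "D n \<le> D 0" using D_bound Suc.prems by auto
  then have inb: "X n \<in> cball x0 (2 * \<rho>)" by (rule inball)
  have gv: "inner (g n) v = 0" using ker[OF inb] by (simp add: g_def adjoint_inner)
  have "xi (Suc n) - x0 = (xi n - x0) - al n *\<^sub>R g n + bt n *\<^sub>R ((xi n - x0) - (xip n - x0))"
    by (simp add: stS mm_def algebra_simps)
  then have "inner (xi (Suc n) - x0) v = 0" using IH gv by (simp add: inner_diff_left inner_add_left)
  then show ?case using IH by (simp add: stS)
qed

lemma final_orth:
  assumes Rq: "R = (\<lambda>x. ereal ((norm x)\<^sup>2 / 2))"
    and ker: "\<And>x. x \<in> cball x0 (2 * \<rho>) \<Longrightarrow> blinfun_apply (Lop x) v = 0"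
  shows "inner (X NN - x0) v = 0"
proof -
  have "X NN = xi NN" using quad_gc[OF Rq] by (simp add: X_def)
  then show ?thesis using quad_orth[OF Rq ker, of NN] NN_props(2) by auto
qed

end

lemma wl_lim: "weakly_conv z p \<Longrightarrow> (\<lambda>n. inner (z n) w) \<longlonglongrightarrow> inner p w"
  by (simp add: weakly_conv_def)

lemma wl_orth:
  assumes wc: "weakly_conv z p" and h: "\<And>n. inner (z n - c) v = 0"
  shows "inner (p - c) v = 0"
proof -
  have "(\<lambda>n. inner (z n) v - inner c v) \<longlonglongrightarrow> inner p v - inner c v"
    by (intro tendsto_diff wl_lim[OF wc] tendsto_const)
  moreover have "(\<lambda>n. inner (z n) v - inner c v) = (\<lambda>n. 0)" using h by (simp add: inner_diff_left)
  ultimately have "(\<lambda>n. 0::real) \<longlonglongrightarrow> inner p v - inner c v" by simp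
  then have "inner p v - inner c v = 0" using LIMSEQ_unique[OF _ tendsto_const] by blast
  then show ?thesis by (simp add: inner_diff_left)
qed

lemma wl_ball:
  assumes wc: "weakly_conv z p" and h: "\<And>n. norm (z n - c) \<le> r"
  shows "norm (p - c) \<le> r"
proof -
  have r0: "0 \<le> r" using h[of 0] norm_ge_zero order_trans by blast
  have "(\<lambda>n. inner (z n) (p - c) - inner c (p - c)) \<longlonglongrightarrow> inner p (p - c) - inner c (p - c)"
    by (intro tendsto_diff wl_lim[OF wc] tendsto_const)
  then have lim: "(\<lambda>n. inner (z n - c) (p - c)) \<longlonglongrightarrow> (norm (p - c))\<^sup>2"
    by (simp add: inner_diff_left power2_norm_eq_inner)
  have "inner (z n - c) (p - c) \<le> r * norm (p - c)" for n
  proof -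
    have "inner (z n - c) (p - c) \<le> norm (z n - c) * norm (p - c)" using Cauchy_Schwarz_ineq2 abs_le_D1 by blast
    also have "\<dots> \<le> r * norm (p - c)" using h by (simp add: mult_right_mono)
    finally show ?thesis .
  qed
  then have "(norm (p - c))\<^sup>2 \<le> r * norm (p - c)" by (intro tendsto_le[OF _ tendsto_const lim]) auto
  then have "norm (p - c) * norm (p - c) \<le> r * norm (p - c)" by (simp add: power2_eq_square)
  then show ?thesis using r0 by (cases "norm (p - c) = 0") (auto simp: mult_le_cancel_right)
qed

lemma subseq_principle:
  fixes a :: "nat \<Rightarrow> real"
  assumes h: "\<And>q::nat\<Rightarrow>nat. strict_mono q \<Longrightarrow> \<exists>s::nat\<Rightarrow>nat. strict_mono s \<and> (\<lambda>l. a (q (s l))) \<longlonglongrightarrow> L"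
  shows "a \<longlonglongrightarrow> L"
proof (rule LIMSEQ_I)
  fix r :: real assume r: "0 < r"
  show "\<exists>no. \<forall>n\<ge>no. norm (a n - L) < r"
  proof (rule ccontr)
    assume fr0: "\<not> (\<exists>no. \<forall>n\<ge>no. norm (a n - L) < r)"
    have fr: "\<exists>n\<ge>no. \<not> norm (a n - L) < r" for no using fr0 by blast
    define S where "S = {n. r \<le> norm (a n - L)}"
    have "infinite S"
    proof
      assume "finite S"
      then obtain M where M: "\<And>n. n \<in> S \<Longrightarrow> n \<le> M" unfolding finite_nat_set_iff_bounded_le by auto
      obtain n where "n \<ge> Suc M" "\<not> norm (a n - L) < r" using fr by blast
      then show False using M[of n] by (simp add: S_def not_less)
    qed
    then obtain q :: "nat \<Rightarrow> nat" where q: "strict_mono q" "\<And>n. q n \<in> S" using infinite_enumerate by blast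
    obtain s where s: "strict_mono s" and sl: "(\<lambda>l. a (q (s l))) \<longlonglongrightarrow> L" using h[OF q(1)] by blast
    have "\<exists>no. \<forall>n\<ge>no. norm (a (q (s n)) - L) < r" using sl r by (simp only: LIMSEQ_iff)
    then obtain no where "\<forall>n\<ge>no. norm (a (q (s n)) - L) < r" by blast
    then have "norm (a (q (s no)) - L) < r" by simp
    moreover have "q (s no) \<in> S" by (rule q(2))
    ultimately show False by (simp add: S_def)
  qed
qed

theorem mainTheorem4:
  fixes R :: "'a::{real_inner, complete_space} \<Rightarrow> ereal"
    and F :: "'a \<Rightarrow> 'b::{real_inner, complete_space}"
    and D :: "'a set"
    and Lop :: "'a \<Rightarrow> ('a \<Rightarrow>\<^sub>L 'b)"
    and y :: 'b and x0 \<xi>0 :: 'a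
    and \<sigma> \<rho> \<eta> Lc \<tau> \<mu>0 \<mu>1 :: real and \<beta> :: ereal and adaptive :: bool
    and \<delta> :: "nat \<Rightarrow> real" and yd :: "nat \<Rightarrow> 'b"
  assumes R_proper: "proper_fun R"
    and R_lsc: "lsc_fun R"
    and sigma_pos: "\<sigma> > 0"
    and R_sconv: "strongly_convex R \<sigma>"
    and rho_pos: "\<rho> > 0"
    and xi0: "\<xi>0 \<in> subdiff R x0"
    and ball_dom: "cball x0 (2 * \<rho>) \<subseteq> D"
    and sol_exists: "\<exists>xb\<in>D. F xb = y \<and> bregman R \<xi>0 xb x0 \<le> ereal (\<sigma> * \<rho>\<^sup>2)"
    and F_weakly_closed: "\<And>xs x v. (\<forall>n. xs n \<in> D) \<Longrightarrow> weakly_conv xs x \<Longrightarrow>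
                          (\<lambda>n. F (xs n)) \<longlonglongrightarrow> v \<Longrightarrow> x \<in> D \<and> F x = v"
    and L_cont: "continuous_on (cball x0 (2 * \<rho>)) Lop"
    and eta: "0 \<le> \<eta>" "\<eta> < 1"
    and tcc: "\<And>x xb. x \<in> cball x0 (2 * \<rho>) \<Longrightarrow> xb \<in> cball x0 (2 * \<rho>) \<Longrightarrow>
               norm (F x - F xb - blinfun_apply (Lop xb) (x - xb)) \<le> \<eta> * norm (F x - F xb)"
    and Lc_pos: "Lc > 0"
    and L_bound: "\<And>x. x \<in> cball x0 (2 * \<rho>) \<Longrightarrow> norm (Lop x) \<le> Lc"
    and tau: "\<tau> > 1"
    and beta_pos: "\<beta> > 0"
    and mu0: "\<mu>0 > 0" and mu1: "\<mu>1 > 0"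
    and param: "1 - (1 + \<eta>) / \<tau> - \<eta> - \<mu>0 / (4 * \<sigma>) > 0"
    and delta_pos: "\<And>k. \<delta> k > 0"
    and delta_lim: "\<delta> \<longlonglongrightarrow> 0"
    and noise: "\<And>k. norm (yd k - y) \<le> \<delta> k"
  shows
    "(\<exists>kl xs. strict_mono kl \<and> xs \<in> D \<and> F xs = y \<and> xs \<in> cball x0 (2 * \<rho>) \<and>
        weakly_conv (\<lambda>l. alg1_x R F Lop \<sigma> \<eta> Lc adaptive \<mu>0 \<mu>1 \<beta> \<xi>0 (yd (kl l)) (\<delta> (kl l))
                           (alg1_stop R F Lop \<sigma> \<eta> Lc adaptive \<mu>0 \<mu>1 \<beta> \<xi>0 (yd (kl l)) (\<delta> (kl l)) \<tau>)) xs)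
     \<and> ((R = (\<lambda>x. ereal ((norm x)\<^sup>2 / 2))) \<longrightarrow>
        (\<forall>xd. xd \<in> D \<and> F xd = y \<and> (\<forall>z\<in>D. F z = y \<longrightarrow> norm (xd - x0) \<le> norm (z - x0)) \<longrightarrow>
           (\<forall>x\<in>cball x0 (2 * \<rho>). \<forall>v. blinfun_apply (Lop xd) v = 0 \<longrightarrow> blinfun_apply (Lop x) v = 0) \<longrightarrow>
           weakly_conv (\<lambda>k. alg1_x R F Lop \<sigma> \<eta> Lc adaptive \<mu>0 \<mu>1 \<beta> \<xi>0 (yd k) (\<delta> k)
                           (alg1_stop R F Lop \<sigma> \<eta> Lc adaptive \<mu>0 \<mu>1 \<beta> \<xi>0 (yd k) (\<delta> k) \<tau>)) xd))"
proof -
  obtain xb where xbD: "xb \<in> D" and xbF: "F xb = y" and xbB: "bregman R \<xi>0 xb x0 \<le> ereal (\<sigma> * \<rho>\<^sup>2)"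
    using sol_exists by blast
  have RK: "run R \<sigma> x0 \<xi>0 F Lop \<eta> Lc \<mu>0 \<mu>1 \<beta> \<rho> xb y (yd k) (\<delta> k) \<tau>" for k
    unfolding run_def run_axioms_def sconv_def
    using R_proper R_lsc sigma_pos R_sconv xi0 rho_pos xbF xbB tcc eta Lc_pos L_bound tau beta_pos mu0 mu1 param
      delta_pos[of k] noise[of k] by auto
  define xk where "xk k = alg1_x R F Lop \<sigma> \<eta> Lc adaptive \<mu>0 \<mu>1 \<beta> \<xi>0 (yd k) (\<delta> k)
                           (alg1_stop R F Lop \<sigma> \<eta> Lc adaptive \<mu>0 \<mu>1 \<beta> \<xi>0 (yd k) (\<delta> k) \<tau>)" for k
  have K: "norm (F (xk k) - yd k) \<le> \<tau> * \<delta> k \<and> norm (xk k - xb) \<le> \<rho> \<and> xk k \<in> cball x0 (2 * \<rho>)" for k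
  proof -
    interpret r: run R \<sigma> x0 \<xi>0 F Lop \<eta> Lc adaptive \<mu>0 \<mu>1 \<beta> \<rho> xb y "yd k" "\<delta> k" \<tau> by (rule RK)
    show ?thesis using r.final by (simp add: xk_def r.NN_eq r.X_eq)
  qed
  have xbb: "norm (xb - x0) \<le> \<rho>"
  proof -
    interpret r: run R \<sigma> x0 \<xi>0 F Lop \<eta> Lc adaptive \<mu>0 \<mu>1 \<beta> \<rho> xb y "yd 0" "\<delta> 0" \<tau> by (rule RK)
    show ?thesis by (rule r.xb_ball)
  qed
  have KQ: "inner (xk k - x0) v = 0"
    if Rq: "R = (\<lambda>x. ereal ((norm x)\<^sup>2 / 2))"
      and kv: "\<And>x. x \<in> cball x0 (2 * \<rho>) \<Longrightarrow> blinfun_apply (Lop x) v = 0" for k v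
  proof -
    interpret r: run R \<sigma> x0 \<xi>0 F Lop \<eta> Lc adaptive \<mu>0 \<mu>1 \<beta> \<rho> xb y "yd k" "\<delta> k" \<tau> by (rule RK)
    show ?thesis using r.final_orth[OF Rq kv] by (simp add: xk_def r.NN_eq r.X_eq)
  qed
  have SUB: "\<exists>s p. strict_mono s \<and> weakly_conv (\<lambda>l. xk (q (s l))) p \<and> p \<in> D \<and> F p = y \<and> norm (p - xb) \<le> \<rho>"
    if q: "strict_mono q" for q :: "nat \<Rightarrow> nat"
  proof -
    have "norm (xk (q l)) \<le> norm xb + \<rho>" for l
      using K[of "q l"] norm_triangle_sub[of "xk (q l)" xb] by linarith
    then obtain s p where s: "strict_mono s" and wc: "weakly_conv ((\<lambda>l. xk (q l)) \<circ> s) p"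
      using weak_compact[of "\<lambda>l. xk (q l)" "norm xb + \<rho>"] by blast
    have wc': "weakly_conv (\<lambda>l. xk (q (s l))) p" using wc by (simp add: o_def)
    have qs: "strict_mono (q \<circ> s)" using q s by (rule strict_mono_o)
    have dl: "(\<lambda>l. \<delta> (q (s l))) \<longlonglongrightarrow> 0" using LIMSEQ_subseq_LIMSEQ[OF delta_lim qs] by (simp add: o_def)
    have "(\<lambda>l. F (xk (q (s l))) - y) \<longlonglongrightarrow> 0"
    proof (rule Lim_null_comparison)
      show "\<forall>\<^sub>F l in sequentially. norm (F (xk (q (s l))) - y) \<le> (\<tau> + 1) * \<delta> (q (s l))"
      proof (intro always_eventually allI)
        fix l
        have "norm (F (xk (q (s l))) - y) \<le> norm (F (xk (q (s l))) - yd (q (s l))) + norm (yd (q (s l)) - y)"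
          using norm_triangle_ineq[of "F (xk (q (s l))) - yd (q (s l))" "yd (q (s l)) - y"] by simp
        moreover have "(\<tau> + 1) * \<delta> (q (s l)) = \<tau> * \<delta> (q (s l)) + \<delta> (q (s l))" by (simp add: algebra_simps)
        ultimately show "norm (F (xk (q (s l))) - y) \<le> (\<tau> + 1) * \<delta> (q (s l))"
          using K[of "q (s l)"] noise[of "q (s l)"] by linarith
      qed
      show "(\<lambda>l. (\<tau> + 1) * \<delta> (q (s l))) \<longlonglongrightarrow> 0" using tendsto_mult_right_zero[OF dl] by simp
    qed
    then have Fl: "(\<lambda>l. F (xk (q (s l)))) \<longlonglongrightarrow> y" by (simp add: Lim_null[symmetric])
    have inD: "\<forall>n. xk (q (s n)) \<in> D" using K ball_dom by blast
    have pDF: "p \<in> D \<and> F p = y" by (rule F_weakly_closed[OF inD wc' Fl])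
    have "norm (p - xb) \<le> \<rho>" by (rule wl_ball[OF wc']) (use K in auto)
    then show ?thesis using s wc' pDF by blast
  qed
  have incb: "p \<in> cball x0 (2 * \<rho>)" if "norm (p - xb) \<le> \<rho>" for p
  proof -
    have "dist x0 p \<le> dist x0 xb + dist xb p" by (rule dist_triangle)
    then have "dist x0 p \<le> norm (xb - x0) + norm (p - xb)" by (simp add: dist_norm norm_minus_commute)
    then show ?thesis using that xbb by simp
  qed
  have P1: "\<exists>kl xs. strict_mono kl \<and> xs \<in> D \<and> F xs = y \<and> xs \<in> cball x0 (2 * \<rho>) \<and>
        weakly_conv (\<lambda>l. alg1_x R F Lop \<sigma> \<eta> Lc adaptive \<mu>0 \<mu>1 \<beta> \<xi>0 (yd (kl l)) (\<delta> (kl l))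
                           (alg1_stop R F Lop \<sigma> \<eta> Lc adaptive \<mu>0 \<mu>1 \<beta> \<xi>0 (yd (kl l)) (\<delta> (kl l)) \<tau>)) xs"
  proof -
    obtain s p where s: "strict_mono s" and wc: "weakly_conv (\<lambda>l. xk (id (s l))) p"
      and pD: "p \<in> D" "F p = y" and pb: "norm (p - xb) \<le> \<rho>"
      using SUB[OF strict_mono_id] by blast
    have "weakly_conv (\<lambda>l. alg1_x R F Lop \<sigma> \<eta> Lc adaptive \<mu>0 \<mu>1 \<beta> \<xi>0 (yd (s l)) (\<delta> (s l))
                           (alg1_stop R F Lop \<sigma> \<eta> Lc adaptive \<mu>0 \<mu>1 \<beta> \<xi>0 (yd (s l)) (\<delta> (s l)) \<tau>)) p"
      using wc by (simp add: xk_def)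
    then show ?thesis using s pD incb[OF pb] by blast
  qed
  have P2: "(R = (\<lambda>x. ereal ((norm x)\<^sup>2 / 2))) \<longrightarrow>
        (\<forall>xd. xd \<in> D \<and> F xd = y \<and> (\<forall>z\<in>D. F z = y \<longrightarrow> norm (xd - x0) \<le> norm (z - x0)) \<longrightarrow>
           (\<forall>x\<in>cball x0 (2 * \<rho>). \<forall>v. blinfun_apply (Lop xd) v = 0 \<longrightarrow> blinfun_apply (Lop x) v = 0) \<longrightarrow>
           weakly_conv (\<lambda>k. alg1_x R F Lop \<sigma> \<eta> Lc adaptive \<mu>0 \<mu>1 \<beta> \<xi>0 (yd k) (\<delta> k)
                           (alg1_stop R F Lop \<sigma> \<eta> Lc adaptive \<mu>0 \<mu>1 \<beta> \<xi>0 (yd k) (\<delta> k) \<tau>)) xd)"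
  proof (intro impI allI)
    fix xd
    assume Rq: "R = (\<lambda>x. ereal ((norm x)\<^sup>2 / 2))"
      and xdp: "xd \<in> D \<and> F xd = y \<and> (\<forall>z\<in>D. F z = y \<longrightarrow> norm (xd - x0) \<le> norm (z - x0))"
      and kerH: "\<forall>x\<in>cball x0 (2 * \<rho>). \<forall>v. blinfun_apply (Lop xd) v = 0 \<longrightarrow> blinfun_apply (Lop x) v = 0"
    have xdF: "F xd = y" and xdmin: "\<And>z. z \<in> D \<Longrightarrow> F z = y \<Longrightarrow> norm (xd - x0) \<le> norm (z - x0)"
      using xdp by auto
    have xd_b: "norm (xd - x0) \<le> \<rho>" using xdmin[OF xbD xbF] xbb by linarith
    have xd_in: "xd \<in> cball x0 (2 * \<rho>)" using xd_b rho_pos by (simp add: dist_norm norm_minus_commute)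
    have orth_xd: "inner (xd - x0) v = 0" if v: "blinfun_apply (Lop xd) v = 0" for v
    proof (cases "v = 0")
      case True then show ?thesis by simp
    next
      case False
      define w where "w = (\<rho> / norm v) *\<^sub>R v"
      have nw: "norm w = \<rho>" using False rho_pos by (simp add: w_def)
      have Lw: "blinfun_apply (Lop xd) w = 0" using v by (simp add: w_def blinfun.scaleR_right)
      have "0 \<le> (2 * inner (xd - x0) w) * t + (norm w)\<^sup>2 * t\<^sup>2" if t: "\<bar>t\<bar> \<le> 1" for t
      proof -
        define z where "z = xd + t *\<^sub>R w"
        have ntw: "norm (t *\<^sub>R w) \<le> \<rho>" using t nw rho_pos by (simp add: mult_left_le_one_le)
        have "norm (z - x0) \<le> norm (xd - x0) + norm (t *\<^sub>R w)"
          using norm_triangle_ineq[of "xd - x0" "t *\<^sub>R w"] by (simp add: z_def algebra_simps)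
        then have "norm (z - x0) \<le> 2 * \<rho>" using xd_b ntw by linarith
        then have zin: "z \<in> cball x0 (2 * \<rho>)" by (simp add: dist_norm norm_minus_commute)
        have "norm (F z - F xd - blinfun_apply (Lop xd) (z - xd)) \<le> \<eta> * norm (F z - F xd)"
          by (rule tcc[OF zin xd_in])
        moreover have "blinfun_apply (Lop xd) (z - xd) = 0" using Lw by (simp add: z_def blinfun.scaleR_right)
        ultimately have "norm (F z - y) \<le> \<eta> * norm (F z - y)" using xdF by simp
        then have "(1 - \<eta>) * norm (F z - y) \<le> 0" by (simp add: algebra_simps)
        then have "norm (F z - y) \<le> 0" using eta by (simp add: mult_le_0_iff)
        then have Fz: "F z = y" by simp
        have "norm (xd - x0) \<le> norm (z - x0)" using xdmin[OF _ Fz] zin ball_dom by blast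
        then have "(norm (xd - x0))\<^sup>2 \<le> (norm (z - x0))\<^sup>2" by (simp add: power_mono)
        also have "(norm (z - x0))\<^sup>2 = (norm (xd - x0))\<^sup>2 + 2 * inner (xd - x0) (t *\<^sub>R w) + (norm (t *\<^sub>R w))\<^sup>2"
          using norm_add_sq[of "xd - x0" "t *\<^sub>R w"] by (simp add: z_def algebra_simps)
        finally show ?thesis by (simp add: power_mult_distrib algebra_simps)
      qed
      then have "2 * inner (xd - x0) w = 0" using quad0[of "2 * inner (xd - x0) w" "(norm w)\<^sup>2"] by simp
      then show ?thesis using False rho_pos by (simp add: w_def)
    qed
    have limq: "p = xd" if wc: "weakly_conv (\<lambda>l. xk (q (s l))) p" and pD: "F p = y" and pb: "norm (p - xb) \<le> \<rho>"
      for q s :: "nat \<Rightarrow> nat" and p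
    proof -
      have pin: "p \<in> cball x0 (2 * \<rho>)" by (rule incb[OF pb])
      have "norm (F p - F xd - blinfun_apply (Lop xd) (p - xd)) \<le> \<eta> * norm (F p - F xd)" by (rule tcc[OF pin xd_in])
      then have L0: "blinfun_apply (Lop xd) (p - xd) = 0" using pD xdF by simp
      have kv: "\<And>x. x \<in> cball x0 (2 * \<rho>) \<Longrightarrow> blinfun_apply (Lop x) (p - xd) = 0" using kerH L0 by blast
      have "inner (xk (q (s l)) - x0) (p - xd) = 0" for l by (rule KQ[OF Rq kv])
      then have "inner (p - x0) (p - xd) = 0" by (rule wl_orth[OF wc])
      moreover have "inner (xd - x0) (p - xd) = 0" by (rule orth_xd[OF L0])
      ultimately have "inner (p - xd) (p - xd) = 0"
        by (metis diff_diff_eq2 diff_self inner_diff_left add.commute diff_add_cancel)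
      then show "p = xd" by simp
    qed
    have "weakly_conv xk xd"
      unfolding weakly_conv_def
    proof
      fix v
      show "(\<lambda>k. inner (xk k) v) \<longlonglongrightarrow> inner xd v"
      proof (rule subseq_principle)
        fix q :: "nat \<Rightarrow> nat" assume q: "strict_mono q"
        obtain s p where s: "strict_mono s" and wc: "weakly_conv (\<lambda>l. xk (q (s l))) p"
          and pD: "F p = y" and pb: "norm (p - xb) \<le> \<rho>" using SUB[OF q] by blast
        have "p = xd" by (rule limq[where q=q and s=s, OF wc pD pb])
        then show "\<exists>s::nat\<Rightarrow>nat. strict_mono s \<and> (\<lambda>l. inner (xk (q (s l))) v) \<longlonglongrightarrow> inner xd v"
          using s wl_lim[OF wc] by blast
      qed
    qed
    then show "weakly_conv (\<lambda>k. alg1_x R F Lop \<sigma> \<eta> Lc adaptive \<mu>0 \<mu>1 \<beta> \<xi>0 (yd k) (\<delta> k)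
                           (alg1_stop R F Lop \<sigma> \<eta> Lc adaptive \<mu>0 \<mu>1 \<beta> \<xi>0 (yd k) (\<delta> k) \<tau>)) xd"
      by (simp add: xk_def[abs_def])
  qed
  show ?thesis using P1 P2 by blast
qed

end
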